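(* Let $A$ be an integral domain containing $\mathbb{Q}$, let $R:=A/\mathbb{Q}^\times$ be the quotient hyperring, $\pi:A\to R$ the canonical projection, $X=(\operatorname{Spec}A,\mathcal{O}_X)$ the usual affine scheme and $Y=(\operatorname{Spec}R,\mathcal{O}_Y)$ the hyperring scheme of $R$. Then: (1) the map $\varphi:\operatorname{Spec}R\to\operatorname{Spec}A$, $\mathfrak{p}\mapsto\pi^{-1}(\mathfrak{p})$, is a homeomorphism; (2) for every nonempty open subset $U\subseteq X$, $\mathcal{O}_Y(\varphi^{-1}(U))\cong\mathcal{O}_X(U)/\mathbb{Q}^\times$ as hyperrings.
   Context: For a commutative ring $B$ and a subgroup $G$ of its unit group, the quotient hyperring $B/G$ is the set of cosets $bG$ with $(xG)(yG)=xyG$ and $xG+yG=\{qG\mid q=xt+ys,\ t,s\in G\}$; for nonempty $U$, $\mathcal{O}_X(U)$ is an integral domain containing $\mathbb{Q}$, so $\mathcal{O}_X(U)/\mathbb{Q}^\times$ is defined. $R$ is a hyperring without zero-divisors. Hyperrings, hyperideals ($a-rb\subseteq I$ for $a,b\in I$), prime hyperideals, and $\operatorname{Spec}R$ with the Zariski topology (closed sets $V(I)$) are as for rings. For a multiplicative submonoid $T$ of $R$, $T^{-1}R$ is $R\times T$ modulo $(r_1,t_1)\sim(r_2,t_2)\iff xr_1t_2=xr_2t_1$ for some $x\in T$, with $\frac{r_1}{t_1}+\frac{r_2}{t_2}=\{\frac y{t_1t_2}\mid y\in r_1t_2+t_1r_2\}$ and componentwise multiplication; $R_\mathfrak{p}=(R\setminus\mathfrak{p})^{-1}R$.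 The sheaf $\mathcal{O}_Y$: $\mathcal{O}_Y(V)$ is the set of maps $s:V\to\bigsqcup_{\mathfrak{p}\in V}R_\mathfrak{p}$, $s(\mathfrak{p})\in R_\mathfrak{p}$, such that each point of $V$ has a neighbourhood on which $s(\mathfrak{q})=\frac af$ for fixed $a,f\in R$ with $f\notin\mathfrak{q}$; multiplication is pointwise and $s+t=\{r\mid r(\mathfrak{p})\in s(\mathfrak{p})+t(\mathfrak{p})\ \forall\mathfrak{p}\in V\}$. *)

theory Defs
  imports Main
begin

record 'a hyperring =
  hcarrier :: "'a set"
  hplus :: "'a \<Rightarrow> 'a \<Rightarrow> 'a set"
  htimes :: "'a \<Rightarrow> 'a \<Rightarrow> 'a"
  hzero :: 'a
  hone :: 'a

definition ring_hyp :: "'a::comm_ring_1 hyperring" where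
  "ring_hyp = \<lparr>hcarrier = UNIV, hplus = (\<lambda>x y. {x + y}), htimes = (*), hzero = 0, hone = 1\<rparr>"

definition hneg :: "('a, 'm) hyperring_scheme \<Rightarrow> 'a \<Rightarrow> 'a" where
  "hneg H x = (THE y. y \<in> hcarrier H \<and> hzero H \<in> hplus H x y)"

definition hideal :: "('a, 'm) hyperring_scheme \<Rightarrow> 'a set \<Rightarrow> bool" where
  "hideal H I \<longleftrightarrow> I \<subseteq> hcarrier H \<and> I \<noteq> {} \<and>
     (\<forall>a\<in>I. \<forall>b\<in>I. \<forall>r\<in>hcarrier H. hplus H a (hneg H (htimes H r b)) \<subseteq> I)"

definition hprime :: "('a, 'm) hyperring_scheme \<Rightarrow> 'a set \<Rightarrow> bool" where
  "hprime H P \<longleftrightarrow> hideal H P \<and> P \<noteq> hcarrier H \<and>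
     (\<forall>a\<in>hcarrier H. \<forall>b\<in>hcarrier H. htimes H a b \<in> P \<longrightarrow> a \<in> P \<or> b \<in> P)"

definition hSpec :: "('a, 'm) hyperring_scheme \<Rightarrow> 'a set set" where
  "hSpec H = {P. hprime H P}"

definition hV :: "('a, 'm) hyperring_scheme \<Rightarrow> 'a set \<Rightarrow> 'a set set" where
  "hV H I = {P \<in> hSpec H. I \<subseteq> P}"

definition zopen :: "('a, 'm) hyperring_scheme \<Rightarrow> 'a set set \<Rightarrow> bool" where
  "zopen H U \<longleftrightarrow> (\<exists>I. hideal H I \<and> U = hSpec H - hV H I)"

definition hcoset :: "('a, 'm) hyperring_scheme \<Rightarrow> 'a set \<Rightarrow> 'a \<Rightarrow> 'a set" where
  "hcoset B G x = {htimes B x g | g. g \<in> G}"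

definition quot_times :: "('a, 'm) hyperring_scheme \<Rightarrow> 'a set \<Rightarrow> 'a set \<Rightarrow> 'a set \<Rightarrow> 'a set" where
  "quot_times B G X Y = (SOME Z. \<exists>x y. x \<in> hcarrier B \<and> y \<in> hcarrier B \<and>
       X = hcoset B G x \<and> Y = hcoset B G y \<and> Z = hcoset B G (htimes B x y))"

definition hquot :: "('a, 'm) hyperring_scheme \<Rightarrow> 'a set \<Rightarrow> 'a set hyperring" where
  "hquot B G = \<lparr>hcarrier = hcoset B G ` hcarrier B,
     hplus = (\<lambda>X Y. {hcoset B G q | q x y t s. x \<in> hcarrier B \<and> y \<in> hcarrier B \<and>
                 X = hcoset B G x \<and> Y = hcoset B G y \<and> t \<in> G \<and> s \<in> G \<and>
                 q \<in> hplus B (htimes B x t) (htimes B y s)}),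
     htimes = quot_times B G,
     hzero = hcoset B G (hzero B),
     hone = hcoset B G (hone B)\<rparr>"

text \<open>The image of \<open>\<rat>\<^sup>\<times>\<close> in a ring containing \<open>\<rat>\<close>.\<close>
definition rat_units :: "'a::comm_ring_1 set" where
  "rat_units = {u. \<exists>p q :: int. p \<noteq> 0 \<and> q \<noteq> 0 \<and> of_int q * u = of_int p}"

text \<open>The class of (r,t) in \<open>T\<^sup>-\<^sup>1 H\<close>.\<close>
definition hfrac :: "('a, 'm) hyperring_scheme \<Rightarrow> 'a set \<Rightarrow> 'a \<Rightarrow> 'a \<Rightarrow> ('a \<times> 'a) set" where
  "hfrac H T r t = {(r', t'). r' \<in> hcarrier H \<and> t' \<in> T \<and>
      (\<exists>x\<in>T. htimes H x (htimes H r t') = htimes H x (htimes H r' t))}"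

definition hloc :: "('a, 'm) hyperring_scheme \<Rightarrow> 'a set \<Rightarrow> ('a \<times> 'a) set set" where
  "hloc H P = {hfrac H (hcarrier H - P) r t | r t. r \<in> hcarrier H \<and> t \<in> hcarrier H - P}"

definition loc_plus :: "('a, 'm) hyperring_scheme \<Rightarrow> 'a set \<Rightarrow> ('a \<times> 'a) set \<Rightarrow> ('a \<times> 'a) set \<Rightarrow> ('a \<times> 'a) set set" where
  "loc_plus H P u v = {hfrac H (hcarrier H - P) y (htimes H t1 t2) | y r1 t1 r2 t2.
      r1 \<in> hcarrier H \<and> r2 \<in> hcarrier H \<and> t1 \<in> hcarrier H - P \<and> t2 \<in> hcarrier H - P \<and>
      u = hfrac H (hcarrier H - P) r1 t1 \<and> v = hfrac H (hcarrier H - P) r2 t2 \<and>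
      y \<in> hplus H (htimes H r1 t2) (htimes H t1 r2)}"

definition loc_times :: "('a, 'm) hyperring_scheme \<Rightarrow> 'a set \<Rightarrow> ('a \<times> 'a) set \<Rightarrow> ('a \<times> 'a) set \<Rightarrow> ('a \<times> 'a) set" where
  "loc_times H P u v = (SOME w. \<exists>r1 t1 r2 t2.
      r1 \<in> hcarrier H \<and> r2 \<in> hcarrier H \<and> t1 \<in> hcarrier H - P \<and> t2 \<in> hcarrier H - P \<and>
      u = hfrac H (hcarrier H - P) r1 t1 \<and> v = hfrac H (hcarrier H - P) r2 t2 \<and>
      w = hfrac H (hcarrier H - P) (htimes H r1 r2) (htimes H t1 t2))"

definition hsections :: "('a, 'm) hyperring_scheme \<Rightarrow> 'a set set \<Rightarrow> ('a set \<Rightarrow> ('a \<times> 'a) set) set" where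
  "hsections H V = {s. (\<forall>P. P \<notin> V \<longrightarrow> s P = undefined) \<and> (\<forall>P\<in>V. s P \<in> hloc H P) \<and>
      (\<forall>P\<in>V. \<exists>W a f. zopen H W \<and> P \<in> W \<and> W \<subseteq> V \<and> a \<in> hcarrier H \<and> f \<in> hcarrier H \<and>
          (\<forall>Q\<in>W. f \<notin> Q \<and> s Q = hfrac H (hcarrier H - Q) a f))}"

definition const_sec :: "('a, 'm) hyperring_scheme \<Rightarrow> 'a set set \<Rightarrow> 'a \<Rightarrow> 'a set \<Rightarrow> ('a \<times> 'a) set" where
  "const_sec H V a = (\<lambda>P. if P \<in> V then hfrac H (hcarrier H - P) a (hone H) else undefined)"

definition hsheaf :: "('a, 'm) hyperring_scheme \<Rightarrow> 'a set set \<Rightarrow> ('a set \<Rightarrow> ('a \<times> 'a) set) hyperring" where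
  "hsheaf H V = \<lparr>hcarrier = hsections H V,
     hplus = (\<lambda>s t. {r \<in> hsections H V. \<forall>P\<in>V. r P \<in> loc_plus H P (s P) (t P)}),
     htimes = (\<lambda>s t P. if P \<in> V then loc_times H P (s P) (t P) else undefined),
     hzero = const_sec H V (hzero H),
     hone = const_sec H V (hone H)\<rparr>"

definition hyperring_iso :: "('a \<Rightarrow> 'b) \<Rightarrow> ('a, 'm) hyperring_scheme \<Rightarrow> ('b, 'n) hyperring_scheme \<Rightarrow> bool" where
  "hyperring_iso f H K \<longleftrightarrow> bij_betw f (hcarrier H) (hcarrier K) \<and>
     (\<forall>x\<in>hcarrier H. \<forall>y\<in>hcarrier H. f (htimes H x y) = htimes K (f x) (f y) \<and>
                                      f ` hplus H x y = hplus K (f x) (f y)) \<and>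
     f (hzero H) = hzero K \<and> f (hone H) = hone K"

end

theory Submission
  imports Defs "HOL-Computational_Algebra.Fraction_Field"
begin


abbreviation QAr :: "'a::idom set" where "QAr \<equiv> rat_units"
abbreviation HAr :: "'a::idom hyperring" where "HAr \<equiv> ring_hyp"
abbreviation PI :: "'a::idom \<Rightarrow> 'a set" where "PI \<equiv> hcoset ring_hyp rat_units"
abbreviation RR :: "'a::idom set hyperring" where "RR \<equiv> hquot ring_hyp rat_units"
definition PHI :: "'a set set \<Rightarrow> 'a::idom set" where "PHI P = {a. PI a \<in> P}"
definition PSI :: "'a::idom set \<Rightarrow> 'a set set" where "PSI p = PI ` p"

definition cQ :: "'a::idom itself \<Rightarrow> bool" where
  "cQ _ \<longleftrightarrow> (\<forall>n::nat. n \<noteq> 0 \<longrightarrow> (of_nat n :: 'a) dvd 1)"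

lemma ofint_dvd1:
  assumes "\<forall>n::nat. n \<noteq> 0 \<longrightarrow> (of_nat n :: 'a::idom) dvd 1" "p \<noteq> 0"
  shows "(of_int p :: 'a) dvd 1"
proof (cases "p \<ge> 0")
  case True
  then have "(of_int p :: 'a) = of_nat (nat p)" by simp
  moreover have "nat p \<noteq> 0" using True assms(2) by simp
  ultimately show ?thesis using assms(1) by metis
next
  case False
  then have "(of_int p :: 'a) = - of_nat (nat (-p))" by (metis minus_minus of_int_minus of_int_of_nat_eq le_cases nat_0_le neg_0_le_iff_le)
  moreover have "nat (-p) \<noteq> 0" using False by simp
  ultimately show ?thesis using assms(1) by (metis dvd_minus_iff minus_dvd_iff)
qed

lemma QA_intro: "p \<noteq> 0 \<Longrightarrow> q \<noteq> 0 \<Longrightarrow> of_int q * u = (of_int p::'a::idom) \<Longrightarrow> u \<in> QAr"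
  unfolding rat_units_def by blast

lemma QA_one: "(1::'a::idom) \<in> QAr"
  unfolding rat_units_def by (rule CollectI, rule exI[of _ 1], rule exI[of _ 1]) simp

lemma QA_mult: assumes "u \<in> QAr" "v \<in> QAr" shows "(u*v::'a::idom) \<in> QAr"
proof -
  obtain p1 q1 where 1: "p1 \<noteq> 0" "q1 \<noteq> 0" "of_int q1 * u = (of_int p1::'a)" using assms(1) unfolding rat_units_def by auto
  obtain p2 q2 where 2: "p2 \<noteq> 0" "q2 \<noteq> 0" "of_int q2 * v = (of_int p2::'a)" using assms(2) unfolding rat_units_def by auto
  have "of_int (q1*q2) * (u*v) = (of_int (p1*p2)::'a)"
    using 1 2 by (metis mult.assoc mult.left_commute of_int_mult)
  then show ?thesis using 1 2 by (intro QA_intro[of "p1*p2" "q1*q2"]) auto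
qed

lemma QA_neg: assumes "u \<in> QAr" shows "(-u::'a::idom) \<in> QAr"
proof -
  obtain p1 q1 where 1: "p1 \<noteq> 0" "q1 \<noteq> 0" "of_int q1 * u = (of_int p1::'a)" using assms(1) unfolding rat_units_def by auto
  have "of_int q1 * (-u) = (of_int (-p1)::'a)" using 1 by simp
  then show ?thesis unfolding rat_units_def using 1 by (intro CollectI exI[of _ "-p1"] exI[of _ q1]) simp
qed

locale qd =
  fixes cq :: "'a::idom itself"
  assumes cq: "\<forall>n::nat. n \<noteq> 0 \<longrightarrow> (of_nat n :: 'a) dvd 1"
begin

lemma QA_nz: "(u::'a) \<in> QAr \<Longrightarrow> u \<noteq> 0"
  unfolding rat_units_def using ofint_dvd1[OF cq] by fastforce

lemma QA_inv: assumes "(u::'a) \<in> QAr" shows "\<exists>u'\<in>QAr. u * u' = 1"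
proof -
  obtain p q where 1: "p \<noteq> 0" "q \<noteq> 0" "of_int q * u = (of_int p::'a)" using assms(1) unfolding rat_units_def by auto
  obtain w where w: "(of_int p::'a) * w = 1" using ofint_dvd1[OF cq 1(1)] by (metis dvdE)
  have "of_int p * (of_int q * w) = (of_int q :: 'a)" using w by (metis mult.left_commute mult.right_neutral)
  then have "of_int q * w \<in> QAr" using 1 by (intro QA_intro[of q p]) auto
  moreover have "u * (of_int q * w) = 1" using 1 w by (metis mult.assoc mult.commute)
  ultimately show ?thesis by blast
qed

lemma PI_alt: "PI x = {x * g | g. g \<in> QAr}"
  by (simp add: hcoset_def ring_hyp_def)

lemma PI_eq: "PI x = PI y \<longleftrightarrow> (\<exists>q\<in>QAr. y = x * (q::'a))"
proof
  assume "PI x = PI y"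
  then have "y \<in> PI x" unfolding PI_alt using QA_one by (metis (mono_tags, lifting) mem_Collect_eq mult_1_right)
  then show "\<exists>q\<in>QAr. y = x * q" unfolding PI_alt by auto
next
  assume "\<exists>q\<in>QAr. y = x * q"
  then obtain q where q: "q \<in> QAr" "y = x*q" by blast
  obtain q' where q': "q' \<in> QAr" "q*q' = 1" using QA_inv q by blast
  show "PI x = PI y"
  proof (unfold PI_alt, intro equalityI subsetI)
    fix z assume "z \<in> {x * g |g. g \<in> QAr}"
    then obtain g where "g \<in> QAr" "z = x * g" by blast
    then have "z = y * (q' * g)" "q'*g \<in> QAr" using q q' QA_mult by (auto simp: algebra_simps)
    then show "z \<in> {y * g |g. g \<in> QAr}" by blast
  next
    fix z assume "z \<in> {y * g |g. g \<in> QAr}"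
    then obtain g where "g \<in> QAr" "z = y * g" by blast
    then have "z = x * (q * g)" "q*g \<in> QAr" using q QA_mult by (auto simp: algebra_simps)
    then show "z \<in> {x * g |g. g \<in> QAr}" by blast
  qed
qed

lemma PI_zero: "PI x = PI 0 \<longleftrightarrow> x = (0::'a)"
  using PI_eq[of x 0] PI_eq[of 0 x] QA_nz by auto

lemma PI_mem_self: "(x::'a) \<in> PI x"
  unfolding PI_alt using QA_one by force

lemma carrier_RR: "hcarrier (RR::'a set hyperring) = range PI"
  by (simp add: hquot_def ring_hyp_def)

lemma zero_RR: "hzero (RR::'a set hyperring) = PI 0" and one_RR: "hone (RR::'a set hyperring) = PI 1"
  by (simp_all add: hquot_def ring_hyp_def)

lemma times_RR: "htimes (RR::'a set hyperring) (PI x) (PI y) = PI (x*y)"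
proof -
  have "htimes (RR::'a set hyperring) (PI x) (PI y) = quot_times ring_hyp QAr (PI x) (PI y)"
    by (simp add: hquot_def)
  also have "\<dots> = PI (x*y)"
    unfolding quot_times_def
  proof (rule someI2)
    show "\<exists>x' y'. x' \<in> hcarrier ring_hyp \<and> y' \<in> hcarrier ring_hyp \<and> PI x = PI x' \<and> PI y = PI y' \<and> PI (x*y) = hcoset ring_hyp QAr (htimes ring_hyp x' y')"
      by (intro exI[of _ x] exI[of _ y]) (simp add: ring_hyp_def)
  next
    fix Z assume "\<exists>x' y'. x' \<in> hcarrier ring_hyp \<and> y' \<in> hcarrier ring_hyp \<and> PI x = PI x' \<and> PI y = PI y' \<and> Z = hcoset ring_hyp QAr (htimes ring_hyp x' y')"
    then obtain x' y' where "PI x = PI x'" "PI y = PI y'" "Z = PI (x'*y')" by (auto simp: ring_hyp_def)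
    then obtain q1 q2 where "q1 \<in> QAr" "q2 \<in> QAr" "x' = x*q1" "y' = y*q2" "Z = PI (x'*y')" using PI_eq by metis
    then have "x'*y' = (x*y)*(q1*q2)" "q1*q2 \<in> QAr" using QA_mult by (auto simp: algebra_simps)
    then show "Z = PI (x*y)" using PI_eq \<open>Z = PI (x'*y')\<close> by metis
  qed
  finally show ?thesis .
qed

lemma plus_RR: "hplus (RR::'a set hyperring) (PI a) (PI b) = {PI (a*t + b*s) | t s. t \<in> QAr \<and> s \<in> QAr}"
proof -
  have "hplus (RR::'a set hyperring) (PI a) (PI b) = {PI q | q x y t s. PI a = PI x \<and> PI b = PI y \<and> t \<in> QAr \<and> s \<in> QAr \<and> q = x*t + y*s}"
    by (simp add: hquot_def ring_hyp_def)
  also have "\<dots> = {PI (a*t + b*s) | t s. t \<in> QAr \<and> s \<in> QAr}"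
  proof (intro equalityI subsetI)
    fix Z assume "Z \<in> {PI q | q x y t s. PI a = PI x \<and> PI b = PI y \<and> t \<in> QAr \<and> s \<in> QAr \<and> q = x*t + y*s}"
    then obtain x y t s where h: "PI a = PI x" "PI b = PI y" "t \<in> QAr" "s \<in> QAr" "Z = PI (x*t+y*s)" by blast
    then obtain q1 q2 where "q1 \<in> QAr" "q2 \<in> QAr" "x = a*q1" "y = b*q2" using PI_eq by metis
    then have "x*t+y*s = a*(q1*t) + b*(q2*s)" "q1*t \<in> QAr" "q2*s \<in> QAr" using h QA_mult by (auto simp: algebra_simps)
    then show "Z \<in> {PI (a*t + b*s) | t s. t \<in> QAr \<and> s \<in> QAr}" using h by auto
  next
    fix Z assume "Z \<in> {PI (a*t + b*s) | t s. t \<in> QAr \<and> s \<in> QAr}"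
    then show "Z \<in> {PI q | q x y t s. PI a = PI x \<and> PI b = PI y \<and> t \<in> QAr \<and> s \<in> QAr \<and> q = x*t + y*s}" by blast
  qed
  finally show ?thesis .
qed

lemma neg_RR: "hneg (RR::'a set hyperring) (PI a) = PI a"
  unfolding hneg_def
proof (rule the_equality)
  show "PI a \<in> hcarrier RR \<and> hzero RR \<in> hplus RR (PI a) (PI a)"
  proof -
    have "PI 0 = PI (a*1 + a*(-1))" by simp
    then show ?thesis unfolding carrier_RR zero_RR plus_RR using QA_one QA_neg[OF QA_one] by blast
  qed
next
  fix Y assume "Y \<in> hcarrier RR \<and> hzero RR \<in> hplus RR (PI a) Y"
  then obtain b t s where h: "Y = PI b" "t \<in> QAr" "s \<in> QAr" "PI 0 = PI (a*t + b*s)"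
    unfolding carrier_RR zero_RR by (auto simp: plus_RR)
  then have e: "a*t + b*s = 0" using PI_zero by metis
  obtain s' where s': "s' \<in> QAr" "s*s' = 1" using QA_inv h by blast
  have "b = a * (-(t*s'))"
  proof -
    have "b = b*(s*s')" using s' by simp
    also have "\<dots> = (b*s)*s'" by (simp add: algebra_simps)
    also have "\<dots> = (-(a*t))*s'" using e by (metis add_eq_0_iff add.commute)
    finally show ?thesis by (simp add: algebra_simps)
  qed
  moreover have "-(t*s') \<in> QAr" using QA_neg QA_mult h s' by blast
  ultimately show "Y = PI a" using h PI_eq by metis
qed

end

lemma HA_simps[simp]: "hcarrier (HAr::'a::idom hyperring) = UNIV" "hplus (HAr::'a::idom hyperring) x y = {x+y}"
  "htimes (HAr::'a::idom hyperring) x y = x*y" "hzero (HAr::'a::idom hyperring) = 0" "hone (HAr::'a::idom hyperring) = 1"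
  by (simp_all add: ring_hyp_def)

lemma neg_HA[simp]: "hneg (HAr::'a::idom hyperring) x = -x"
  unfolding hneg_def by (rule the_equality) (auto simp: add_eq_0_iff2 add.commute)
  
lemma hideal_HA: "hideal (HAr::'a::idom hyperring) I \<longleftrightarrow> I \<noteq> {} \<and> (\<forall>a\<in>I. \<forall>b\<in>I. \<forall>r. a - r*b \<in> I)"
  unfolding hideal_def by auto

lemma ideal_props:
  assumes "hideal (HAr::'a::idom hyperring) I"
  shows "0 \<in> I" "a \<in> I \<Longrightarrow> b \<in> I \<Longrightarrow> a + b \<in> I" "b \<in> I \<Longrightarrow> r * b \<in> I" "b \<in> I \<Longrightarrow> b * r \<in> I"
proof -
  from assms obtain x where x: "x \<in> I" "\<forall>a\<in>I. \<forall>b\<in>I. \<forall>r. a - r*b \<in> I" unfolding hideal_HA by blast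
  then show z: "0 \<in> I" by (metis diff_self mult_1)
  show "a \<in> I \<Longrightarrow> b \<in> I \<Longrightarrow> a + b \<in> I" using x(2) by (metis diff_minus_eq_add mult_minus1)
  show rb: "b \<in> I \<Longrightarrow> r * b \<in> I" using x(2) z by (metis diff_0 minus_minus mult_minus_left)
  show "b \<in> I \<Longrightarrow> b * r \<in> I" using rb by (simp add: mult.commute)
qed

lemma hprime_HA: "hprime (HAr::'a::idom hyperring) P \<longleftrightarrow> hideal HAr P \<and> P \<noteq> UNIV \<and> (\<forall>a b. a*b \<in> P \<longrightarrow> a \<in> P \<or> b \<in> P)"
  unfolding hprime_def by auto

lemma zero_prime: "{0::'a::idom} \<in> hSpec HAr"
  unfolding hSpec_def hprime_HA hideal_HA by (auto, metis UNIV_I singletonD zero_neq_one)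

context qd
begin

lemma step_RR: "hplus (RR::'a set hyperring) (PI a) (hneg RR (htimes RR (PI r) (PI b))) = {PI (a*t + r*b*s) | t s. t \<in> QAr \<and> s \<in> QAr}"
  by (simp add: times_RR neg_RR plus_RR)

lemma hideal_RR: "hideal (RR::'a set hyperring) I \<longleftrightarrow> I \<subseteq> range PI \<and> I \<noteq> {} \<and>
   (\<forall>a b r (t::'a) (s::'a). PI a \<in> I \<longrightarrow> PI b \<in> I \<longrightarrow> t \<in> QAr \<longrightarrow> s \<in> QAr \<longrightarrow> PI (a*t + r*b*s) \<in> I)"
proof
  assume h: "hideal RR I"
  then have h1: "I \<subseteq> range PI" "I \<noteq> {}" "\<And>a b r. a \<in> I \<Longrightarrow> b \<in> I \<Longrightarrow> r \<in> range PI \<Longrightarrow> hplus RR a (hneg RR (htimes RR r b)) \<subseteq> I"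
    unfolding hideal_def carrier_RR by blast+
  show "I \<subseteq> range PI \<and> I \<noteq> {} \<and>
   (\<forall>a b r (t::'a) (s::'a). PI a \<in> I \<longrightarrow> PI b \<in> I \<longrightarrow> t \<in> QAr \<longrightarrow> s \<in> QAr \<longrightarrow> PI (a*t + r*b*s) \<in> I)"
  proof (intro conjI h1 allI impI)
    fix a b r t s assume "PI a \<in> I" "PI b \<in> I" "(t::'a) \<in> QAr" "(s::'a) \<in> QAr"
    then show "PI (a*t + r*b*s) \<in> I" using h1(3)[of "PI a" "PI b" "PI r"] step_RR by blast
  qed
next
  assume h: "I \<subseteq> range PI \<and> I \<noteq> {} \<and>
   (\<forall>a b r (t::'a) (s::'a). PI a \<in> I \<longrightarrow> PI b \<in> I \<longrightarrow> t \<in> QAr \<longrightarrow> s \<in> QAr \<longrightarrow> PI (a*t + r*b*s) \<in> I)"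
  show "hideal RR I" unfolding hideal_def carrier_RR
  proof (intro conjI ballI)
    show "I \<subseteq> range PI" "I \<noteq> {}" using h by auto
    fix x y z :: "'a set" assume "x \<in> I" "y \<in> I" "z \<in> range PI"
    then obtain a b r where "x = PI a" "y = PI b" "z = PI r" using h by blast
    then show "hplus (RR::'a set hyperring) x (hneg (RR::'a set hyperring) (htimes (RR::'a set hyperring) z y)) \<subseteq> I" using step_RR h \<open>x \<in> I\<close> \<open>y \<in> I\<close> by auto
  qed
qed

lemma ideal_RR_A: assumes "hideal (RR::'a set hyperring) I"
  shows "hideal HAr (PHI I)" "PSI (PHI I) = I"
proof -
  have h: "I \<subseteq> range PI" "I \<noteq> {}" "\<And>a b r (t::'a) (s::'a). PI a \<in> I \<Longrightarrow> PI b \<in> I \<Longrightarrow> t \<in> QAr \<Longrightarrow> s \<in> QAr \<Longrightarrow> PI (a*t + r*b*s) \<in> I"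
    using assms unfolding hideal_RR by blast+
  show "PSI (PHI I) = I" unfolding PSI_def PHI_def using h(1) by auto
  show "hideal HAr (PHI I)" unfolding hideal_HA
  proof
    show "PHI I \<noteq> {}" unfolding PHI_def using h(1,2) by blast
    show "\<forall>a\<in>PHI I. \<forall>b\<in>PHI I. \<forall>r. a - r * b \<in> PHI I"
    proof (intro ballI allI)
      fix a b r assume "a \<in> PHI I" "b \<in> PHI I"
      then have "PI (a*1 + r*b*(-1)) \<in> I" using h(3) QA_one QA_neg[OF QA_one] unfolding PHI_def by blast
      then show "a - r * b \<in> PHI I" unfolding PHI_def by simp
    qed
  qed
qed

lemma PI_in_PSI: assumes "hideal (HAr::'a hyperring) J" shows "PI a \<in> PSI J \<longleftrightarrow> a \<in> J"
proof
  assume "PI a \<in> PSI J"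
  then obtain j where "j \<in> J" "PI a = PI j" unfolding PSI_def by auto
  then obtain q where "a = j*q" using PI_eq by metis
  then show "a \<in> J" using ideal_props(4)[OF assms] \<open>j \<in> J\<close> by blast
qed (auto simp: PSI_def)

lemma ideal_A_RR: assumes "hideal (HAr::'a hyperring) J"
  shows "hideal RR (PSI J)" "PHI (PSI J) = J"
proof -
  show "PHI (PSI J) = J" unfolding PHI_def using PI_in_PSI[OF assms] by auto
  show "hideal RR (PSI J)" unfolding hideal_RR
  proof (intro conjI allI impI)
    show "PSI J \<subseteq> range PI" "PSI J \<noteq> {}" using assms unfolding PSI_def hideal_HA by auto
    fix a b r t s assume "PI a \<in> PSI J" "PI b \<in> PSI J" "(t::'a) \<in> QAr" "(s::'a) \<in> QAr"
    then have "a \<in> J" "b \<in> J" using PI_in_PSI[OF assms] by auto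
    then have "a*t + r*b*s \<in> J" using ideal_props[OF assms] by (metis mult.assoc)
    then show "PI (a*t + r*b*s) \<in> PSI J" unfolding PSI_def by blast
  qed
qed

lemma spec_RR: assumes "P \<in> hSpec (RR::'a set hyperring)"
  shows "PHI P \<in> hSpec HAr" "PSI (PHI P) = P"
proof -
  have h: "hideal RR P" "P \<noteq> range PI" "\<And>a b. a \<in> range PI \<Longrightarrow> b \<in> range PI \<Longrightarrow> htimes RR a b \<in> P \<Longrightarrow> a \<in> P \<or> b \<in> P"
    using assms unfolding hSpec_def hprime_def carrier_RR by auto
  show "PSI (PHI P) = P" using ideal_RR_A(2)[OF h(1)] .
  show "PHI P \<in> hSpec HAr" unfolding hSpec_def hprime_HA
  proof (intro CollectI conjI allI impI)
    show "hideal HAr (PHI P)" using ideal_RR_A(1)[OF h(1)] .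
    show "PHI P \<noteq> UNIV" using h(1,2) ideal_RR_A(2)[OF h(1)] unfolding PSI_def by auto
    fix a b assume "a*b \<in> PHI P"
    then have "htimes RR (PI a) (PI b) \<in> P" unfolding PHI_def using times_RR by simp
    then show "a \<in> PHI P \<or> b \<in> PHI P" using h(3) unfolding PHI_def by blast
  qed
qed

lemma spec_A: assumes "p \<in> hSpec (HAr::'a hyperring)"
  shows "PSI p \<in> hSpec RR" "PHI (PSI p) = p"
proof -
  have h: "hideal HAr p" "p \<noteq> UNIV" "\<And>a b. a*b \<in> p \<Longrightarrow> a \<in> p \<or> b \<in> p"
    using assms unfolding hSpec_def hprime_HA by auto
  show "PHI (PSI p) = p" using ideal_A_RR(2)[OF h(1)] .
  show "PSI p \<in> hSpec RR" unfolding hSpec_def hprime_def carrier_RR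
  proof (intro CollectI conjI ballI impI)
    show "hideal RR (PSI p)" using ideal_A_RR(1)[OF h(1)] .
    show "PSI p \<noteq> range PI" using h(2) ideal_A_RR(2)[OF h(1)] unfolding PHI_def by auto
    fix x y assume "x \<in> range PI" "y \<in> range PI" "htimes RR x y \<in> PSI p"
    then obtain a b where "x = PI a" "y = PI b" "PI (a*b) \<in> PSI p" using times_RR by auto
    then show "x \<in> PSI p \<or> y \<in> PSI p" using PI_in_PSI[OF h(1)] h(3) by auto
  qed
qed

lemma PHI_mono: "P \<subseteq> Q \<Longrightarrow> PHI P \<subseteq> PHI Q" unfolding PHI_def by auto
lemma PSI_mono: "P \<subseteq> Q \<Longrightarrow> PSI P \<subseteq> PSI Q" unfolding PSI_def by auto

lemma zopen_RR_iff: "zopen (RR::'a set hyperring) W \<longleftrightarrow> (\<exists>U. zopen HAr U \<and> W = PSI ` U)"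
proof
  assume "zopen RR W"
  then obtain I where I: "hideal RR I" "W = hSpec RR - hV RR I" unfolding zopen_def by blast
  define J where "J = PHI I"
  have J: "hideal HAr J" "PSI J = I" using ideal_RR_A[OF I(1)] J_def by auto
  have "W = PSI ` (hSpec HAr - hV HAr J)"
  proof (intro equalityI subsetI)
    fix P assume "P \<in> W"
    then have P: "P \<in> hSpec RR" "\<not> I \<subseteq> P" using I unfolding hV_def by auto
    have "\<not> J \<subseteq> PHI P" using P spec_RR[OF P(1)] J PSI_mono by metis
    then show "P \<in> PSI ` (hSpec HAr - hV HAr J)" using spec_RR[OF P(1)] unfolding hV_def by (metis (no_types, lifting) DiffI image_eqI mem_Collect_eq)
  next
    fix P assume "P \<in> PSI ` (hSpec HAr - hV HAr J)"
    then obtain p where p: "p \<in> hSpec HAr" "\<not> J \<subseteq> p" "P = PSI p" unfolding hV_def by auto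
    have "\<not> I \<subseteq> P" using p spec_A[OF p(1)] J_def PHI_mono by metis
    then show "P \<in> W" using I spec_A[OF p(1)] p unfolding hV_def by auto
  qed
  moreover have "zopen HAr (hSpec HAr - hV HAr J)" unfolding zopen_def using J by blast
  ultimately show "\<exists>U. zopen HAr U \<and> W = PSI ` U" by blast
next
  assume "\<exists>U. zopen HAr U \<and> W = PSI ` U"
  then obtain J where J: "hideal HAr J" "W = PSI ` (hSpec HAr - hV HAr J)" unfolding zopen_def by blast
  define I where "I = PSI J"
  have I: "hideal RR I" "PHI I = J" using ideal_A_RR[OF J(1)] I_def by auto
  have "W = hSpec RR - hV RR I"
  proof (intro equalityI subsetI)
    fix P assume "P \<in> W"
    then obtain p where p: "p \<in> hSpec HAr" "\<not> J \<subseteq> p" "P = PSI p" using J unfolding hV_def by auto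
    have "\<not> I \<subseteq> P" using p spec_A[OF p(1)] I PHI_mono by metis
    then show "P \<in> hSpec RR - hV RR I" using spec_A[OF p(1)] p unfolding hV_def by auto
  next
    fix P assume "P \<in> hSpec RR - hV RR I"
    then have P: "P \<in> hSpec RR" "\<not> I \<subseteq> P" unfolding hV_def by auto
    have "\<not> J \<subseteq> PHI P" using P spec_RR[OF P(1)] I_def PSI_mono by metis
    then show "P \<in> W" using spec_RR[OF P(1)] J unfolding hV_def by (metis (no_types, lifting) DiffI image_eqI mem_Collect_eq)
  qed
  then show "zopen RR W" unfolding zopen_def using I by blast
qed

end

lemma zopen_sub: "zopen H U \<Longrightarrow> U \<subseteq> hSpec H" unfolding zopen_def by auto

lemma generic_in: assumes "zopen (HAr::'a::idom hyperring) U" "P \<in> U" shows "{0} \<in> U"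
proof -
  obtain I where I: "hideal HAr I" "U = hSpec HAr - hV HAr I" using assms unfolding zopen_def by blast
  have "P \<in> hSpec HAr" "\<not> I \<subseteq> P" using I assms unfolding hV_def by auto
  moreover have "0 \<in> P" using \<open>P \<in> hSpec HAr\<close> ideal_props(1) unfolding hSpec_def hprime_HA by blast
  ultimately have "\<not> I \<subseteq> {0}" by blast
  then show ?thesis using I zero_prime unfolding hV_def by auto
qed

lemma zopen_Int: assumes "zopen (HAr::'a::idom hyperring) U1" "zopen HAr U2" shows "zopen HAr (U1 \<inter> U2)"
proof -
  obtain I1 where I1: "hideal HAr I1" "U1 = hSpec HAr - hV HAr I1" using assms unfolding zopen_def by blast
  obtain I2 where I2: "hideal HAr I2" "U2 = hSpec HAr - hV HAr I2" using assms unfolding zopen_def by blast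
  have "hideal HAr (I1 \<inter> I2)" using I1(1) I2(1) ideal_props(1)[OF I1(1)] ideal_props(1)[OF I2(1)]
    unfolding hideal_HA by blast
  moreover have "U1 \<inter> U2 = hSpec HAr - hV HAr (I1 \<inter> I2)"
  proof (intro equalityI subsetI)
    fix P assume "P \<in> U1 \<inter> U2"
    then obtain a b where "P \<in> hSpec HAr" "a \<in> I1" "a \<notin> P" "b \<in> I2" "b \<notin> P" using I1 I2 unfolding hV_def by auto
    moreover then have "a*b \<in> I1 \<inter> I2" using ideal_props(3,4) I1(1) I2(1) by blast
    moreover have "a*b \<notin> P" using calculation unfolding hSpec_def hprime_HA by blast
    ultimately show "P \<in> hSpec HAr - hV HAr (I1 \<inter> I2)" unfolding hV_def by blast
  next
    fix P assume "P \<in> hSpec HAr - hV HAr (I1 \<inter> I2)"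
    then show "P \<in> U1 \<inter> U2" using I1 I2 unfolding hV_def by blast
  qed
  ultimately show ?thesis unfolding zopen_def by blast
qed

lemma zopen_D: "zopen (HAr::'a::idom hyperring) {P \<in> hSpec HAr. f \<notin> P}"
proof -
  have i: "hideal HAr (range (\<lambda>r. r * f))" unfolding hideal_HA
  proof (intro conjI ballI allI)
    fix a b r assume "a \<in> range (\<lambda>r. r * f)" "b \<in> range (\<lambda>r. r * f)"
    then obtain x y where "a = x*f" "b = y*f" by blast
    then have "a - r*b = (x - r*y)*f" by (simp add: algebra_simps)
    then show "a - r*b \<in> range (\<lambda>r. r * f)" by blast
  qed blast
  have "{P \<in> hSpec HAr. f \<notin> P} = hSpec HAr - hV HAr (range (\<lambda>r. r * f))"
  proof (intro equalityI subsetI)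
    fix P assume "P \<in> {P \<in> hSpec HAr. f \<notin> P}"
    then have "P \<in> hSpec HAr" "1*f \<notin> P" by auto
    then show "P \<in> hSpec HAr - hV HAr (range (\<lambda>r. r * f))" unfolding hV_def by blast
  next
    fix P assume P: "P \<in> hSpec HAr - hV HAr (range (\<lambda>r. r * f))"
    then have "hideal HAr P" unfolding hSpec_def hprime_HA by simp
    then have "f \<in> P \<Longrightarrow> range (\<lambda>r. r * f) \<subseteq> P" using ideal_props(3) by blast
    then show "P \<in> {P \<in> hSpec HAr. f \<notin> P}" using P unfolding hV_def by blast
  qed
  then show ?thesis unfolding zopen_def using i by blast
qed




definition QF :: "'a::idom fract set" where "QF = (\<lambda>q. Fract q 1) ` QAr"
definition clsA :: "'a::idom set \<Rightarrow> 'a fract \<Rightarrow> ('a \<times> 'a) set" where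
  "clsA p v = {(a,f). f \<notin> p \<and> Fract a f = v}"
definition rep :: "'a::idom set \<Rightarrow> 'a fract \<Rightarrow> bool" where
  "rep p v \<longleftrightarrow> (\<exists>a f. f \<notin> p \<and> v = Fract a f)"
definition clsR :: "'a::idom set \<Rightarrow> 'a fract \<Rightarrow> ('a set \<times> 'a set) set" where
  "clsR p v = {(PI a, PI f) | a f. f \<notin> p \<and> (\<exists>c\<in>QF. Fract a f = c * v)}"

lemma prime_facts: assumes "p \<in> hSpec (HAr::'a::idom hyperring)"
  shows "0 \<in> p" "f \<notin> p \<Longrightarrow> f \<noteq> 0" "1 \<notin> p" "f \<notin> p \<Longrightarrow> g \<notin> p \<Longrightarrow> f*g \<notin> p"
proof -
  have h: "hideal HAr p" "p \<noteq> UNIV" "\<And>a b. a*b \<in> p \<Longrightarrow> a \<in> p \<or> b \<in> p" using assms unfolding hSpec_def hprime_HA by auto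
  show "0 \<in> p" using ideal_props(1)[OF h(1)] .
  then show "f \<notin> p \<Longrightarrow> f \<noteq> 0" by auto
  show "1 \<notin> p" using h(2) ideal_props(3)[OF h(1)] by (metis UNIV_eq_I mult.right_neutral)
  show "f \<notin> p \<Longrightarrow> g \<notin> p \<Longrightarrow> f*g \<notin> p" using h(3) by blast
qed

lemma hfrac_A: assumes "p \<in> hSpec (HAr::'a::idom hyperring)" "f \<notin> p"
  shows "hfrac HAr (UNIV - p) a f = clsA p (Fract a f)"
proof -
  have f0: "f \<noteq> 0" using prime_facts(2)[OF assms] .
  show ?thesis unfolding hfrac_def clsA_def
  proof (intro equalityI subsetI)
    fix z assume "z \<in> {(r', t'). r' \<in> hcarrier HAr \<and> t' \<in> UNIV - p \<and> (\<exists>x\<in>UNIV - p. htimes HAr x (htimes HAr a t') = htimes HAr x (htimes HAr r' f))}"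
    then obtain r' t' x where z: "z = (r',t')" "t' \<notin> p" "x \<notin> p" "x*(a*t') = x*(r'*f)" by auto
    have "x \<noteq> 0" "t' \<noteq> 0" using prime_facts(2)[OF assms(1)] z by auto
    then have "a*t' = r'*f" using z(4) by simp
    then have "Fract r' t' = Fract a f" using eq_fract(1)[OF \<open>t' \<noteq> 0\<close> f0] by simp
    then show "z \<in> {(a', f'). f' \<notin> p \<and> Fract a' f' = Fract a f}" using z by auto
  next
    fix z assume "z \<in> {(a', f'). f' \<notin> p \<and> Fract a' f' = Fract a f}"
    then obtain r' t' where z: "z = (r',t')" "t' \<notin> p" "Fract r' t' = Fract a f" by auto
    have "t' \<noteq> 0" using prime_facts(2)[OF assms(1)] z by auto
    then have "a*t' = r'*f" using z(3) eq_fract(1)[OF \<open>t' \<noteq> 0\<close> f0] by simp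
    then show "z \<in> {(r', t'). r' \<in> hcarrier HAr \<and> t' \<in> UNIV - p \<and> (\<exists>x\<in>UNIV - p. htimes HAr x (htimes HAr a t') = htimes HAr x (htimes HAr r' f))}"
      using z prime_facts(3)[OF assms(1)] by auto
  qed
qed

lemma clsA_inj: "rep p v \<Longrightarrow> clsA p v = clsA p w \<Longrightarrow> v = w"
  unfolding rep_def clsA_def by auto

lemma hloc_A: assumes "p \<in> hSpec (HAr::'a::idom hyperring)"
  shows "hloc HAr p = {clsA p v | v. rep p v}"
proof -
  have "hloc HAr p = {hfrac HAr (UNIV-p) a f | a f. f \<notin> p}" unfolding hloc_def by auto
  also have "\<dots> = {clsA p (Fract a f) | a f. f \<notin> p}" by (metis (no_types, lifting) hfrac_A[OF assms])
  also have "\<dots> = {clsA p v | v. rep p v}" unfolding rep_def by auto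
  finally show ?thesis .
qed

lemma rep_mult: "rep p v \<Longrightarrow> rep p w \<Longrightarrow> p \<in> hSpec (HAr::'a::idom hyperring) \<Longrightarrow> rep p (v*w)"
  unfolding rep_def using prime_facts(4) by fastforce

lemma rep_add: assumes "rep p v" "rep p w" "p \<in> hSpec (HAr::'a::idom hyperring)" shows "rep p (v+w)"
proof -
  obtain a f b g where "f \<notin> p" "g \<notin> p" "v = Fract a f" "w = Fract b g" using assms unfolding rep_def by auto
  moreover then have "f \<noteq> 0" "g \<noteq> 0" "f*g \<notin> p" using prime_facts[OF assms(3)] by auto
  ultimately show ?thesis unfolding rep_def by auto
qed

lemma rep_Fract1: "p \<in> hSpec (HAr::'a::idom hyperring) \<Longrightarrow> rep p (Fract q 1)"
  unfolding rep_def using prime_facts(3) by blast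

context qd
begin

lemma QF_one: "(1::'a fract) \<in> QF"
  unfolding QF_def using QA_one by (metis One_fract_def image_eqI)

lemma QF_mult: assumes "(c::'a fract) \<in> QF" "d \<in> QF" shows "c * d \<in> QF"
proof -
  obtain q r where "q \<in> QAr" "r \<in> QAr" "c = Fract q 1" "d = Fract r 1" using assms unfolding QF_def by auto
  then have "c * d = Fract (q*r) 1" "q*r \<in> QAr" using QA_mult by auto
  then show ?thesis unfolding QF_def by blast
qed

lemma QF_inv: assumes "(c::'a fract) \<in> QF" shows "inverse c \<in> QF" "c \<noteq> 0" "c * inverse c = 1"
proof -
  obtain q where q: "q \<in> QAr" "c = Fract q 1" using assms unfolding QF_def by auto
  obtain q' where q': "q' \<in> QAr" "q*q' = 1" using QA_inv q by blast
  have "q \<noteq> 0" using QA_nz q by auto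
  then show "c \<noteq> 0" using q by (simp add: Zero_fract_def eq_fract)
  then show "c * inverse c = 1" by simp
  have "inverse c = Fract 1 q" using q by simp
  also have "\<dots> = Fract q' 1" using q' \<open>q \<noteq> 0\<close> by (simp add: eq_fract) (simp add: mult.commute)
  finally show "inverse c \<in> QF" unfolding QF_def using q' by auto
qed

lemma rep_QF: assumes "rep p v" "(c::'a fract) \<in> QF" shows "rep p (c*v)"
proof -
  obtain a f q where "f \<notin> p" "v = Fract a f" "c = Fract q 1" using assms unfolding rep_def QF_def by auto
  then have "f \<notin> p" "c * v = Fract (q*a) f" by auto
  then show ?thesis unfolding rep_def by blast
qed

lemma carrier_minus: "hcarrier (RR::'a set hyperring) - P = PI ` (UNIV - PHI P)"
  unfolding carrier_RR PHI_def by auto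

lemma hfrac_R: assumes "P \<in> hSpec (RR::'a set hyperring)" "f \<notin> PHI P"
  shows "hfrac RR (hcarrier RR - P) (PI a) (PI f) = clsR (PHI P) (Fract a f)"
proof -
  let ?p = "PHI P"
  have p: "?p \<in> hSpec HAr" using spec_RR(1)[OF assms(1)] .
  have f0: "f \<noteq> 0" using prime_facts(2)[OF p assms(2)] .
  show ?thesis unfolding hfrac_def clsR_def carrier_minus
  proof (intro equalityI subsetI)
    fix z assume "z \<in> {(r', t'). r' \<in> hcarrier RR \<and> t' \<in> PI ` (UNIV - ?p) \<and>
      (\<exists>x\<in>PI ` (UNIV - ?p). htimes RR x (htimes RR (PI a) t') = htimes RR x (htimes RR r' (PI f)))}"
    then obtain a' f' c where z: "z = (PI a', PI f')" "f' \<notin> ?p" "c \<notin> ?p"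
      "htimes RR (PI c) (htimes RR (PI a) (PI f')) = htimes (RR::'a set hyperring) (PI c) (htimes RR (PI a') (PI f))"
      unfolding carrier_RR by auto
    then have "PI (c*(a*f')) = PI (c*(a'*f))" using times_RR by simp
    then obtain q where q: "q \<in> QAr" "c*(a'*f) = c*(a*f')*q" using PI_eq by metis
    have "c \<noteq> 0" "f' \<noteq> 0" using prime_facts(2)[OF p] z by auto
    then have "a'*f = (q*a)*f'" using q by (simp add: algebra_simps)
    then have "Fract a' f' = Fract q 1 * Fract a f" using eq_fract(1)[OF \<open>f' \<noteq> 0\<close> f0] by simp
    moreover have "Fract q 1 \<in> QF" unfolding QF_def using q by auto
    ultimately show "z \<in> {(PI a', PI f') |a' f'. f' \<notin> ?p \<and> (\<exists>c\<in>QF. Fract a' f' = c * Fract a f)}"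
      using z by blast
  next
    fix z assume "z \<in> {(PI a', PI f') |a' f'. f' \<notin> ?p \<and> (\<exists>c\<in>QF. Fract a' f' = c * Fract a f)}"
    then obtain a' f' c where z: "z = (PI a', PI f')" "f' \<notin> ?p" "c \<in> QF" "Fract a' f' = c * Fract a f" by blast
    then obtain q where q: "q \<in> QAr" "c = Fract q 1" unfolding QF_def by auto
    have "f' \<noteq> 0" using prime_facts(2)[OF p] z by auto
    then have "a'*f = (q*a)*f'" using z q eq_fract(1)[OF \<open>f' \<noteq> 0\<close> f0] by simp
    then have "PI (1*(a*f')) = PI (1*(a'*f))" using PI_eq q by (metis mult.commute mult.left_commute mult_1)
    then have "htimes RR (PI 1) (htimes RR (PI a) (PI f')) = htimes (RR::'a set hyperring) (PI 1) (htimes RR (PI a') (PI f))"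
      using times_RR by simp
    moreover have "PI 1 \<in> PI ` (UNIV - ?p)" using prime_facts(3)[OF p] by auto
    ultimately show "z \<in> {(r', t'). r' \<in> hcarrier RR \<and> t' \<in> PI ` (UNIV - ?p) \<and>
      (\<exists>x\<in>PI ` (UNIV - ?p). htimes RR x (htimes RR (PI a) t') = htimes RR x (htimes RR r' (PI f)))}"
      using z unfolding carrier_RR by blast
  qed
qed

lemma clsR_QF: assumes "(c::'a fract) \<in> QF" shows "clsR p (c*v) = clsR p v"
proof -
  have 1: "clsR p (d*v) \<subseteq> clsR p v" if "d \<in> QF" for d v
    unfolding clsR_def using QF_mult[OF _ that] by (force simp: mult.assoc)
  have e: "inverse c * (c * v) = v" using QF_inv(2)[OF assms] by (simp add: mult.assoc[symmetric])
  have "clsR p v = clsR p (inverse c * (c * v))" by (simp only: e)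
  also have "\<dots> \<subseteq> clsR p (c*v)" using 1 QF_inv(1)[OF assms] by blast
  finally show ?thesis using 1[OF assms] by blast
qed

lemma clsR_inj: assumes "p \<in> hSpec (HAr::'a hyperring)" "rep p v" "clsR p v = clsR p w" shows "\<exists>c\<in>QF. w = c * (v::'a fract)"
proof -
  obtain a f where af: "f \<notin> p" "v = Fract a f" using assms(2) unfolding rep_def by auto
  have "(PI a, PI f) \<in> clsR p v" unfolding clsR_def using af QF_one by force
  then have "(PI a, PI f) \<in> clsR p w" using assms(3) by simp
  then obtain a' f' c where h: "PI a = PI a'" "PI f = PI f'" "f' \<notin> p" "c \<in> QF" "Fract a' f' = c * w"
    unfolding clsR_def by auto
  obtain q1 q2 where q: "q1 \<in> QAr" "q2 \<in> QAr" "a' = a*q1" "f' = f*q2" using h PI_eq by metis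
  have "Fract q1 1 \<in> QF" "Fract q2 1 \<in> QF" unfolding QF_def using q by auto
  then have d: "Fract q1 1 * inverse (Fract q2 1) \<in> QF"
    using QF_mult QF_inv(1) by blast
  have "Fract a' f' = (Fract q1 1 * inverse (Fract q2 1)) * v" using q af by (simp add: mult.commute)
  then have "c * w = (Fract q1 1 * inverse (Fract q2 1)) * v" using h by simp
  then have "w = (inverse c * (Fract q1 1 * inverse (Fract q2 1))) * v"
    using QF_inv(2)[OF h(4)] by (metis (no_types, lifting) mult.assoc mult.left_commute mult_1 inverse_mult_distrib nonzero_inverse_mult_distrib mult.commute field_class.field_inverse)
  moreover have "inverse c * (Fract q1 1 * inverse (Fract q2 1)) \<in> QF" using QF_mult QF_inv(1) h(4) d by blast
  ultimately show ?thesis by blast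
qed

lemma hloc_R: assumes "P \<in> hSpec (RR::'a set hyperring)"
  shows "hloc RR P = {clsR (PHI P) v | v. rep (PHI P) v}"
proof -
  have "hloc RR P = {hfrac RR (hcarrier RR - P) (PI a) (PI f) | a f. f \<notin> PHI P}"
    unfolding hloc_def carrier_minus by (auto simp: carrier_RR) 
  also have "\<dots> = {clsR (PHI P) (Fract a f) | a f. f \<notin> PHI P}" by (metis (no_types, lifting) hfrac_R[OF assms])
  also have "\<dots> = {clsR (PHI P) v | v. rep (PHI P) v}" unfolding rep_def by auto
  finally show ?thesis .
qed

end



definition SA :: "'a::idom set set \<Rightarrow> 'a fract \<Rightarrow> 'a set \<Rightarrow> ('a \<times> 'a) set" where
  "SA U v = (\<lambda>P. if P \<in> U then clsA P v else undefined)"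
definition good :: "'a::idom set set \<Rightarrow> 'a fract \<Rightarrow> bool" where
  "good U v \<longleftrightarrow> (\<forall>P\<in>U. rep P v)"
definition SR :: "'a::idom set set \<Rightarrow> 'a fract \<Rightarrow> 'a set set \<Rightarrow> ('a set \<times> 'a set) set" where
  "SR U v = (\<lambda>P. if P \<in> PSI ` U then clsR (PHI P) v else undefined)"

lemma sections_A: assumes U: "zopen (HAr::'a::idom hyperring) U" "U \<noteq> {}"
  shows "hsections HAr U = SA U ` {v. good U v}"
proof (intro equalityI subsetI)
  have Us: "U \<subseteq> hSpec HAr" using zopen_sub[OF U(1)] .
  have g0: "{0} \<in> U" using generic_in U by blast
  fix s assume s: "s \<in> hsections HAr U"
  have sdef: "(\<forall>P. P \<notin> U \<longrightarrow> s P = undefined) \<and> (\<forall>P\<in>U. s P \<in> hloc HAr P) \<and>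
      (\<forall>P\<in>U. \<exists>W a f. zopen HAr W \<and> P \<in> W \<and> W \<subseteq> U \<and> a \<in> hcarrier HAr \<and> f \<in> hcarrier HAr \<and>
          (\<forall>Q\<in>W. f \<notin> Q \<and> s Q = hfrac HAr (hcarrier HAr - Q) a f))"
    using s unfolding hsections_def by (rule CollectD)
  have s1: "\<And>P. P \<notin> U \<Longrightarrow> s P = undefined" using sdef by simp
  have s2: "\<And>P. P \<in> U \<Longrightarrow> s P \<in> hloc HAr P" using sdef by simp
  have s3': "\<forall>P\<in>U. \<exists>W a f. zopen HAr W \<and> P \<in> W \<and> W \<subseteq> U \<and>
          (\<forall>Q\<in>W. f \<notin> Q \<and> s Q = hfrac HAr (UNIV - Q) a f)" using sdef by simp
  have s3: "\<And>P. P \<in> U \<Longrightarrow> \<exists>W a f. zopen HAr W \<and> P \<in> W \<and> W \<subseteq> U \<and>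
          (\<forall>Q\<in>W. f \<notin> Q \<and> s Q = hfrac HAr (UNIV - Q) a f)" using s3' by (rule bspec)
  have "s {0} \<in> hloc HAr {0}" by (rule s2[OF g0])
  then have "s {0} \<in> {clsA {0} v |v. rep {0} v}" unfolding hloc_A[OF zero_prime] .
  then obtain v0 where v0': "s {0} = clsA {0} v0 \<and> rep {0} v0" unfolding mem_Collect_eq by (rule exE)
  then have v0: "rep {0} v0" "s {0} = clsA {0} v0" by simp_all
  have key: "rep P v0 \<and> s P = clsA P v0" if P: "P \<in> U" for P
  proof -
    from s3[OF P] obtain W a f where W0: "zopen HAr W \<and> P \<in> W \<and> W \<subseteq> U \<and>
          (\<forall>Q\<in>W. f \<notin> Q \<and> s Q = hfrac HAr (UNIV - Q) a f)" by (elim exE)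
    then have W: "zopen HAr W" "P \<in> W" "W \<subseteq> U" "\<And>Q. Q \<in> W \<Longrightarrow> f \<notin> Q \<and> s Q = hfrac HAr (UNIV - Q) a f"
      by simp_all
    have "{0} \<in> W" using generic_in W by blast
    then have "s {0} = clsA {0} (Fract a f)" using W(4) hfrac_A[OF zero_prime] by metis
    then have e: "v0 = Fract a f" using clsA_inj v0 by metis
    have Ps: "P \<in> hSpec HAr" using Us P by blast
    have "s P = clsA P (Fract a f)" using W(4)[OF W(2)] hfrac_A[OF Ps] by simp
    moreover have "rep P v0" unfolding rep_def using e W(4)[OF W(2)] by blast
    ultimately show ?thesis using e by simp
  qed
  have "good U v0" unfolding good_def using key by blast
  moreover have "s = SA U v0"
  proof
    fix P show "s P = SA U v0 P" using key[of P] s1[of P] unfolding SA_def by (cases "P \<in> U") simp_all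
  qed
  ultimately show "s \<in> SA U ` {v. good U v}" by blast
next
  have Us: "U \<subseteq> hSpec HAr" using zopen_sub[OF U(1)] .
  fix s assume "s \<in> SA U ` {v. good U v}"
  then obtain v where v: "good U v" "s = SA U v" by blast
  show "s \<in> hsections HAr U" unfolding hsections_def
  proof (intro CollectI conjI allI impI ballI)
    fix P assume "P \<notin> U" then show "s P = undefined" using v unfolding SA_def by simp
  next
    fix P assume P: "P \<in> U"
    have Ps: "P \<in> hSpec HAr" using Us P by blast
    have "rep P v" using v(1) P unfolding good_def by blast
    moreover have "s P = clsA P v" using v(2) P unfolding SA_def by simp
    ultimately show "s P \<in> hloc HAr P" unfolding hloc_A[OF Ps] by blast
  next
    fix P assume P: "P \<in> U"
    then obtain a f where af: "f \<notin> P" "v = Fract a f" using v unfolding good_def rep_def by blast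
    let ?W = "U \<inter> {Q \<in> hSpec HAr. f \<notin> Q}"
    have "zopen HAr ?W" using zopen_Int[OF U(1) zopen_D] .
    moreover have "P \<in> ?W" using P af Us by auto
    moreover have "\<forall>Q\<in>?W. f \<notin> Q \<and> s Q = hfrac HAr (hcarrier HAr - Q) a f"
    proof
      fix Q assume Q: "Q \<in> ?W"
      then have "Q \<in> hSpec HAr" "f \<notin> Q" "Q \<in> U" by auto
      moreover then have "s Q = clsA Q v" using v(2) unfolding SA_def by simp
      ultimately show "f \<notin> Q \<and> s Q = hfrac HAr (hcarrier HAr - Q) a f" using hfrac_A[of Q f a] af by simp
    qed
    moreover have "?W \<subseteq> U" "a \<in> hcarrier HAr" "f \<in> hcarrier HAr" by auto
    ultimately show "\<exists>W a f. zopen HAr W \<and> P \<in> W \<and> W \<subseteq> U \<and> a \<in> hcarrier HAr \<and> f \<in> hcarrier HAr \<and>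
          (\<forall>Q\<in>W. f \<notin> Q \<and> s Q = hfrac HAr (hcarrier HAr - Q) a f)" by blast
  qed
qed

lemma SA_inj: assumes "U \<noteq> {}" "good U v" "SA U v = SA U w" shows "v = w"
proof -
  obtain P where P: "P \<in> U" using assms by blast
  then have "rep P v" using assms(2) unfolding good_def by blast
  moreover have "clsA P v = clsA P w" using fun_cong[OF assms(3), of P] P unfolding SA_def by simp
  ultimately show ?thesis by (rule clsA_inj)
qed

context qd
begin

lemma PSI_inj: "p \<in> hSpec (HAr::'a hyperring) \<Longrightarrow> q \<in> hSpec HAr \<Longrightarrow> PSI p = PSI q \<Longrightarrow> p = q"
  using spec_A by metis

lemma PI_in_PSI': "p \<in> hSpec (HAr::'a hyperring) \<Longrightarrow> PI a \<in> PSI p \<longleftrightarrow> a \<in> p"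
  using PI_in_PSI unfolding hSpec_def hprime_HA by blast

lemma sections_R: assumes U: "zopen (HAr::'a hyperring) U" "U \<noteq> {}"
  shows "hsections RR (PSI ` U) = SR U ` {v. good U v}"
proof (intro equalityI subsetI)
  have Us: "U \<subseteq> hSpec HAr" using zopen_sub[OF U(1)] .
  have g0: "{0} \<in> U" using generic_in U by blast
  have G0: "PSI {0::'a} \<in> hSpec (RR::'a set hyperring)" "PHI (PSI {0}) = {0::'a}" using spec_A[OF zero_prime] by auto
  fix s assume s: "s \<in> hsections RR (PSI ` U)"
  have sdef: "(\<forall>P. P \<notin> PSI ` U \<longrightarrow> s P = undefined) \<and> (\<forall>P\<in>PSI ` U. s P \<in> hloc RR P) \<and>
      (\<forall>P\<in>PSI ` U. \<exists>W a f. zopen RR W \<and> P \<in> W \<and> W \<subseteq> PSI ` U \<and> a \<in> hcarrier RR \<and> f \<in> hcarrier RR \<and>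
          (\<forall>Q\<in>W. f \<notin> Q \<and> s Q = hfrac RR (hcarrier RR - Q) a f))"
    using s unfolding hsections_def by (rule CollectD)
  have s1: "\<And>P. P \<notin> PSI ` U \<Longrightarrow> s P = undefined" using sdef by blast
  have s2: "\<And>P. P \<in> PSI ` U \<Longrightarrow> s P \<in> hloc RR P" using sdef by blast
  have s3: "\<And>P. P \<in> PSI ` U \<Longrightarrow> \<exists>W a f. zopen RR W \<and> P \<in> W \<and> W \<subseteq> PSI ` U \<and> a \<in> hcarrier RR \<and> f \<in> hcarrier RR \<and>
          (\<forall>Q\<in>W. f \<notin> Q \<and> s Q = hfrac RR (hcarrier RR - Q) a f)"
    using sdef[THEN conjunct2, THEN conjunct2] by (rule bspec)
  have "PSI {0} \<in> PSI ` U" using g0 by blast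
  then have "s (PSI {0}) \<in> hloc RR (PSI {0})" by (rule s2)
  then have "s (PSI {0}) \<in> {clsR {0} v |v. rep {0} v}" unfolding hloc_R[OF G0(1)] G0(2) .
  then obtain v0 where v0': "s (PSI {0}) = clsR {0} v0 \<and> rep {0} v0" unfolding mem_Collect_eq by (rule exE)
  then have v0: "rep {0} v0" "s (PSI {0}) = clsR {0} v0" by simp_all
  have key: "rep (PHI P) v0 \<and> s P = clsR (PHI P) v0" if P: "P \<in> PSI ` U" for P
  proof -
    from s3[OF P] obtain W a' f' where W0: "zopen RR W \<and> P \<in> W \<and> W \<subseteq> PSI ` U \<and> a' \<in> hcarrier RR \<and> f' \<in> hcarrier RR \<and>
          (\<forall>Q\<in>W. f' \<notin> Q \<and> s Q = hfrac RR (hcarrier RR - Q) a' f')" by (elim exE)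
    then have W: "zopen RR W" "P \<in> W" "W \<subseteq> PSI ` U" "a' \<in> hcarrier RR" "f' \<in> hcarrier RR"
      "\<And>Q. Q \<in> W \<Longrightarrow> f' \<notin> Q \<and> s Q = hfrac RR (hcarrier RR - Q) a' f'"
      by simp_all
    obtain a f where af: "a' = PI a" "f' = PI f" using W(4,5) unfolding carrier_RR by auto
    obtain U' where U': "zopen HAr U'" "W = PSI ` U'" using W(1) zopen_RR_iff by blast
    obtain p where p: "p \<in> U'" "P = PSI p" using W(2) U' by auto
    have "{0} \<in> U'" using generic_in U' p by blast
    then have G0W: "PSI {0} \<in> W" using U' by blast
    have W': "\<And>Q. Q \<in> W \<Longrightarrow> Q \<in> hSpec RR \<and> f \<notin> PHI Q \<and> s Q = clsR (PHI Q) (Fract a f)"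
    proof -
      fix Q assume Q: "Q \<in> W"
      then obtain q where q: "q \<in> U'" "Q = PSI q" using U' by auto
      have qs: "q \<in> hSpec HAr" using zopen_sub[OF U'(1)] q by auto
      have Qs: "Q \<in> hSpec RR" using spec_A(1)[OF qs] q by simp
      have "PI f \<notin> Q" using W(6)[OF Q] af by simp
      then have "f \<notin> PHI Q" unfolding PHI_def by simp
      then show "Q \<in> hSpec RR \<and> f \<notin> PHI Q \<and> s Q = clsR (PHI Q) (Fract a f)"
        using W(6)[OF Q] af hfrac_R[OF Qs] Qs by simp
    qed
    have "clsR {0} v0 = clsR {0} (Fract a f)" using W'[OF G0W] G0 v0 by simp
    then obtain c where c: "c \<in> QF" "Fract a f = c * v0" using clsR_inj[OF zero_prime v0(1)] by blast
    have "s P = clsR (PHI P) v0" using W'[OF W(2)] c clsR_QF by simp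
    moreover have "rep (PHI P) v0"
    proof -
      have "v0 = inverse c * Fract a f" using c QF_inv(2)[OF c(1)] by (simp add: mult.assoc[symmetric])
      moreover have "rep (PHI P) (Fract a f)" unfolding rep_def using W'[OF W(2)] by blast
      ultimately show ?thesis using rep_QF QF_inv(1)[OF c(1)] by simp
    qed
    ultimately show ?thesis by simp
  qed
  have "good U v0" unfolding good_def
  proof
    fix p assume "p \<in> U"
    then have "PSI p \<in> PSI ` U" "PHI (PSI p) = p" using spec_A Us by auto
    then show "rep p v0" using key[of "PSI p"] by simp
  qed
  moreover have "s = SR U v0"
  proof
    fix P show "s P = SR U v0 P" using key[of P] s1[of P] unfolding SR_def by (cases "P \<in> PSI ` U") simp_all
  qed
  ultimately show "s \<in> SR U ` {v. good U v}" by blast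
next
  have Us: "U \<subseteq> hSpec HAr" using zopen_sub[OF U(1)] .
  fix s assume "s \<in> SR U ` {v. good U v}"
  then obtain v where v: "good U v" "s = SR U v" by blast
  show "s \<in> hsections RR (PSI ` U)" unfolding hsections_def
  proof (intro CollectI conjI allI impI ballI)
    fix P assume "P \<notin> PSI ` U" then show "s P = undefined" using v unfolding SR_def by simp
  next
    fix P assume "P \<in> PSI ` U"
    then obtain p where p: "p \<in> U" "P = PSI p" by blast
    then have Ps: "P \<in> hSpec RR" "PHI P = p" using spec_A Us by auto
    have "rep p v" using v(1) p unfolding good_def by blast
    moreover have "s P = clsR p v" using v(2) p Ps(2) unfolding SR_def by simp
    ultimately show "s P \<in> hloc RR P" unfolding hloc_R[OF Ps(1)] Ps(2) by blast
  next
    fix P assume "P \<in> PSI ` U"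
    then obtain p where p: "p \<in> U" "P = PSI p" by blast
    then obtain a f where af: "f \<notin> p" "v = Fract a f" using v unfolding good_def rep_def by blast
    let ?U' = "U \<inter> {Q \<in> hSpec HAr. f \<notin> Q}"
    let ?W = "PSI ` ?U'"
    have "zopen RR ?W" using zopen_RR_iff zopen_Int[OF U(1) zopen_D] by blast
    moreover have "P \<in> ?W" using p af Us by auto
    moreover have "\<forall>Q\<in>?W. PI f \<notin> Q \<and> s Q = hfrac RR (hcarrier RR - Q) (PI a) (PI f)"
    proof
      fix Q assume "Q \<in> ?W"
      then obtain q where q: "q \<in> U" "q \<in> hSpec HAr" "f \<notin> q" "Q = PSI q" by auto
      have Qs: "Q \<in> hSpec RR" "PHI Q = q" using spec_A q by auto
      have pf: "PI f \<notin> Q" using PI_in_PSI' q by simp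
      have "Q \<in> PSI ` U" using q by blast
      then have "s Q = clsR (PHI Q) v" using v(2) unfolding SR_def by simp
      then have "s Q = clsR q v" using Qs(2) by simp
      with pf show "PI f \<notin> Q \<and> s Q = hfrac RR (hcarrier RR - Q) (PI a) (PI f)"
        using hfrac_R[OF Qs(1)] Qs(2) q af by simp
    qed
    moreover have "?W \<subseteq> PSI ` U" by auto
    moreover have "PI a \<in> hcarrier RR" "PI f \<in> hcarrier RR" unfolding carrier_RR by auto
    ultimately show "\<exists>W a f. zopen RR W \<and> P \<in> W \<and> W \<subseteq> PSI ` U \<and> a \<in> hcarrier RR \<and> f \<in> hcarrier RR \<and>
          (\<forall>Q\<in>W. f \<notin> Q \<and> s Q = hfrac RR (hcarrier RR - Q) a f)" by blast
  qed
qed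

lemma SR_eq: assumes "zopen (HAr::'a hyperring) U" "U \<noteq> {}" "good U v" "SR U v = SR U w" shows "\<exists>c\<in>QF. w = c * v"
proof -
  obtain p where p: "p \<in> U" using assms by blast
  then have ps: "p \<in> hSpec HAr" using zopen_sub assms by blast
  have "PSI p \<in> PSI ` U" "PHI (PSI p) = p" using p spec_A[OF ps] by auto
  then have "clsR p v = clsR p w" using assms(4) unfolding SR_def by metis
  then show ?thesis using clsR_inj[OF ps] assms(3) p unfolding good_def by blast
qed

lemma SR_QF: assumes c: "(c::'a fract) \<in> QF" shows "SR U (c*v) = SR U v"
  unfolding SR_def by (rule ext) (simp only: clsR_QF[OF c])

end



lemma rep_zero: "p \<in> hSpec (HAr::'a::idom hyperring) \<Longrightarrow> rep p (Fract q 1)"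
  using rep_Fract1 .

lemma good_Fract1: "zopen (HAr::'a::idom hyperring) U \<Longrightarrow> good U (Fract q 1)"
  unfolding good_def using rep_Fract1 zopen_sub by blast

lemma good_add: "zopen (HAr::'a::idom hyperring) U \<Longrightarrow> good U v \<Longrightarrow> good U w \<Longrightarrow> good U (v+w)"
  unfolding good_def using rep_add zopen_sub by blast

lemma good_mult: "zopen (HAr::'a::idom hyperring) U \<Longrightarrow> good U v \<Longrightarrow> good U w \<Longrightarrow> good U (v*w)"
  unfolding good_def using rep_mult zopen_sub by blast

lemma const_A: assumes "zopen (HAr::'a::idom hyperring) U" shows "const_sec HAr U q = SA U (Fract q 1)"
proof
  fix P show "const_sec HAr U q P = SA U (Fract q 1) P"
  proof (cases "P \<in> U")
    case True
    then have Ps: "P \<in> hSpec HAr" using zopen_sub assms by blast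
    show ?thesis using True hfrac_A[OF Ps prime_facts(3)[OF Ps]] unfolding const_sec_def SA_def by simp
  qed (simp add: const_sec_def SA_def)
qed

lemma loc_times_A: assumes Ps: "P \<in> hSpec (HAr::'a::idom hyperring)" and v: "rep P v" and w: "rep P w"
  shows "loc_times HAr P (clsA P v) (clsA P w) = clsA P (v*w)"
  unfolding loc_times_def
proof (rule someI2_ex)
  obtain a1 f1 a2 f2 where r: "f1 \<notin> P" "v = Fract a1 f1" "f2 \<notin> P" "w = Fract a2 f2" using v w unfolding rep_def by blast
  then show "\<exists>x r1 t1 r2 t2. r1 \<in> hcarrier HAr \<and> r2 \<in> hcarrier HAr \<and> t1 \<in> hcarrier HAr - P \<and> t2 \<in> hcarrier HAr - P \<and>
      clsA P v = hfrac HAr (hcarrier HAr - P) r1 t1 \<and> clsA P w = hfrac HAr (hcarrier HAr - P) r2 t2 \<and>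
      x = hfrac HAr (hcarrier HAr - P) (htimes HAr r1 r2) (htimes HAr t1 t2)"
  proof -
    have "clsA P v = hfrac HAr (UNIV-P) a1 f1" "clsA P w = hfrac HAr (UNIV-P) a2 f2" using hfrac_A[OF Ps] r by simp_all
    then show ?thesis using r by (intro exI[of _ "hfrac HAr (UNIV-P) (a1*a2) (f1*f2)"] exI[of _ a1] exI[of _ f1] exI[of _ a2] exI[of _ f2]) auto
  qed
next
  fix x assume "\<exists>r1 t1 r2 t2. r1 \<in> hcarrier HAr \<and> r2 \<in> hcarrier HAr \<and> t1 \<in> hcarrier HAr - P \<and> t2 \<in> hcarrier HAr - P \<and>
      clsA P v = hfrac HAr (hcarrier HAr - P) r1 t1 \<and> clsA P w = hfrac HAr (hcarrier HAr - P) r2 t2 \<and>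
      x = hfrac HAr (hcarrier HAr - P) (htimes HAr r1 r2) (htimes HAr t1 t2)"
  then obtain r1 t1 r2 t2 where h: "t1 \<notin> P" "t2 \<notin> P" "clsA P v = clsA P (Fract r1 t1)" "clsA P w = clsA P (Fract r2 t2)"
    "x = hfrac HAr (UNIV - P) (r1*r2) (t1*t2)" using hfrac_A[OF Ps] by auto
  have "v = Fract r1 t1" "w = Fract r2 t2" using clsA_inj v w h by metis+
  moreover have "x = clsA P (Fract (r1*r2) (t1*t2))" using h(5) hfrac_A[OF Ps] prime_facts(4)[OF Ps h(1,2)] by simp
  ultimately show "x = clsA P (v*w)" by simp
qed

lemma times_HU: assumes "zopen (HAr::'a::idom hyperring) U" "good U v" "good U w"
  shows "htimes (hsheaf HAr U) (SA U v) (SA U w) = SA U (v*w)"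
proof
  fix P show "htimes (hsheaf HAr U) (SA U v) (SA U w) P = SA U (v*w) P"
  proof (cases "P \<in> U")
    case True
    then have "P \<in> hSpec HAr" "rep P v" "rep P w" using zopen_sub assms unfolding good_def by blast+
    then show ?thesis using True loc_times_A unfolding hsheaf_def SA_def by simp
  qed (simp add: hsheaf_def SA_def)
qed

lemma loc_plus_A: assumes Ps: "P \<in> hSpec (HAr::'a::idom hyperring)" and v: "rep P v" and w: "rep P w"
  shows "loc_plus HAr P (clsA P v) (clsA P w) = {clsA P (v+w)}"
proof (intro equalityI subsetI)
  fix x assume "x \<in> loc_plus HAr P (clsA P v) (clsA P w)"
  then obtain y r1 t1 r2 t2 where h: "t1 \<notin> P" "t2 \<notin> P" "clsA P v = clsA P (Fract r1 t1)" "clsA P w = clsA P (Fract r2 t2)"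
    "x = hfrac HAr (UNIV - P) y (t1*t2)" "y = r1*t2 + t1*r2" unfolding loc_plus_def using hfrac_A[OF Ps] by auto
  have "v = Fract r1 t1" "w = Fract r2 t2" using clsA_inj v w h by metis+
  moreover have "x = clsA P (Fract y (t1*t2))" using h(5) hfrac_A[OF Ps] prime_facts(4)[OF Ps h(1,2)] by simp
  moreover have "t1 \<noteq> 0" "t2 \<noteq> 0" using prime_facts(2)[OF Ps] h by auto
  ultimately show "x \<in> {clsA P (v+w)}" using h(6) by (simp add: algebra_simps)
next
  obtain a1 f1 a2 f2 where r: "f1 \<notin> P" "v = Fract a1 f1" "f2 \<notin> P" "w = Fract a2 f2" using v w unfolding rep_def by blast
  have "f1 \<noteq> 0" "f2 \<noteq> 0" "f1*f2 \<notin> P" using prime_facts[OF Ps] r by auto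
  then have e: "clsA P (v+w) = hfrac HAr (UNIV - P) (a1*f2 + f1*a2) (f1*f2)" using hfrac_A[OF Ps] r by (simp add: algebra_simps)
  fix x assume "x \<in> {clsA P (v+w)}"
  then show "x \<in> loc_plus HAr P (clsA P v) (clsA P w)" unfolding loc_plus_def using e r hfrac_A[OF Ps]
    by simp blast
qed

lemma plus_HU: assumes U: "zopen (HAr::'a::idom hyperring) U" "U \<noteq> {}" and v: "good U v" and w: "good U w"
  shows "hplus (hsheaf HAr U) (SA U v) (SA U w) = {SA U (v+w)}"
proof -
  have "hplus (hsheaf HAr U) (SA U v) (SA U w) = {r \<in> hsections HAr U. \<forall>P\<in>U. r P \<in> loc_plus HAr P (SA U v P) (SA U w P)}"
    by (simp add: hsheaf_def)
  also have "\<dots> = {SA U (v+w)}"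
  proof (intro equalityI subsetI)
    fix r assume "r \<in> {r \<in> hsections HAr U. \<forall>P\<in>U. r P \<in> loc_plus HAr P (SA U v P) (SA U w P)}"
    then have r: "r \<in> hsections HAr U" "\<forall>P\<in>U. r P \<in> loc_plus HAr P (SA U v P) (SA U w P)" by auto
    obtain u where u: "good U u" "r = SA U u" using r(1) sections_A[OF U] by auto
    obtain P where P: "P \<in> U" using U by blast
    then have Ps: "P \<in> hSpec HAr" "rep P v" "rep P w" "rep P u" using zopen_sub U v w u unfolding good_def by blast+
    have "r P \<in> loc_plus HAr P (SA U v P) (SA U w P)" using r(2) P by blast
    then have "clsA P u \<in> {clsA P (v+w)}" using P u(2) loc_plus_A[OF Ps(1-3)] unfolding SA_def by simp
    then have "u = v+w" using clsA_inj[OF Ps(4)] by simp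
    then show "r \<in> {SA U (v+w)}" using u by simp
  next
    fix r assume "r \<in> {SA U (v+w)}"
    then have r: "r = SA U (v+w)" by simp
    have "r \<in> hsections HAr U" using r sections_A[OF U] good_add[OF U(1) v w] by auto
    moreover have "\<forall>P\<in>U. r P \<in> loc_plus HAr P (SA U v P) (SA U w P)"
    proof
      fix P assume P: "P \<in> U"
      then have Ps: "P \<in> hSpec HAr" "rep P v" "rep P w" using zopen_sub U v w unfolding good_def by blast+
      show "r P \<in> loc_plus HAr P (SA U v P) (SA U w P)" using P r loc_plus_A[OF Ps] unfolding SA_def by simp
    qed
    ultimately show "r \<in> {r \<in> hsections HAr U. \<forall>P\<in>U. r P \<in> loc_plus HAr P (SA U v P) (SA U w P)}" by simp
  qed
  finally show ?thesis .
qed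


context qd
begin

lemma const_R: assumes "zopen (HAr::'a hyperring) U" shows "const_sec RR (PSI ` U) (PI q) = SR U (Fract q 1)"
proof
  fix P show "const_sec RR (PSI ` U) (PI q) P = SR U (Fract q 1) P"
  proof (cases "P \<in> PSI ` U")
    case True
    then obtain p where p: "p \<in> U" "P = PSI p" by blast
    then have ps: "p \<in> hSpec HAr" using zopen_sub assms by blast
    then have Ps: "P \<in> hSpec RR" "PHI P = p" using spec_A p by auto
    show ?thesis using True hfrac_R[OF Ps(1), of 1 q] prime_facts(3)[OF ps] Ps(2) one_RR
      unfolding const_sec_def SR_def by simp
  qed (simp add: const_sec_def SR_def)
qed

lemma rep_clsR: assumes "P \<in> hSpec (RR::'a set hyperring)" "rep (PHI P) v" "r1 \<in> hcarrier RR" "t1 \<in> hcarrier RR - P"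
  "clsR (PHI P) v = hfrac RR (hcarrier RR - P) r1 t1"
  shows "\<exists>a f c. r1 = PI a \<and> t1 = PI f \<and> f \<notin> PHI P \<and> c \<in> QF \<and> Fract a f = c * v"
proof -
  obtain a f where af: "r1 = PI a" "t1 = PI f" "f \<notin> PHI P" using assms(3,4) carrier_minus unfolding carrier_RR by auto
  then have "clsR (PHI P) v = clsR (PHI P) (Fract a f)" using assms(5) hfrac_R[OF assms(1)] by simp
  then obtain c where "c \<in> QF" "Fract a f = c * v" using clsR_inj[OF spec_RR(1)[OF assms(1)] assms(2)] by blast
  then show ?thesis using af by blast
qed

lemma loc_times_R: assumes Ps: "P \<in> hSpec (RR::'a set hyperring)" and v: "rep (PHI P) v" and w: "rep (PHI P) w"
  shows "loc_times RR P (clsR (PHI P) v) (clsR (PHI P) w) = clsR (PHI P) (v*w)"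
  unfolding loc_times_def
proof (rule someI2_ex)
  have ps: "PHI P \<in> hSpec HAr" using spec_RR(1)[OF Ps] .
  obtain a1 f1 a2 f2 where r: "f1 \<notin> PHI P" "v = Fract a1 f1" "f2 \<notin> PHI P" "w = Fract a2 f2" using v w unfolding rep_def by blast
  have "clsR (PHI P) v = hfrac RR (hcarrier RR - P) (PI a1) (PI f1)" "clsR (PHI P) w = hfrac RR (hcarrier RR - P) (PI a2) (PI f2)"
    using hfrac_R[OF Ps] r by simp_all
  moreover have "PI a1 \<in> hcarrier RR" "PI a2 \<in> hcarrier RR" "PI f1 \<in> hcarrier RR - P" "PI f2 \<in> hcarrier RR - P"
    using r carrier_minus unfolding carrier_RR by auto
  ultimately show "\<exists>x r1 t1 r2 t2. r1 \<in> hcarrier RR \<and> r2 \<in> hcarrier RR \<and> t1 \<in> hcarrier RR - P \<and> t2 \<in> hcarrier RR - P \<and>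
      clsR (PHI P) v = hfrac RR (hcarrier RR - P) r1 t1 \<and> clsR (PHI P) w = hfrac RR (hcarrier RR - P) r2 t2 \<and>
      x = hfrac RR (hcarrier RR - P) (htimes RR r1 r2) (htimes RR t1 t2)" by blast
next
  have ps: "PHI P \<in> hSpec HAr" using spec_RR(1)[OF Ps] .
  fix x assume "\<exists>r1 t1 r2 t2. r1 \<in> hcarrier RR \<and> r2 \<in> hcarrier RR \<and> t1 \<in> hcarrier RR - P \<and> t2 \<in> hcarrier RR - P \<and>
      clsR (PHI P) v = hfrac RR (hcarrier RR - P) r1 t1 \<and> clsR (PHI P) w = hfrac RR (hcarrier RR - P) r2 t2 \<and>
      x = hfrac (RR::'a set hyperring) (hcarrier RR - P) (htimes RR r1 r2) (htimes RR t1 t2)"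
  then obtain r1 t1 r2 t2 where h: "r1 \<in> hcarrier RR" "r2 \<in> hcarrier RR" "t1 \<in> hcarrier RR - P" "t2 \<in> hcarrier RR - P"
      "clsR (PHI P) v = hfrac RR (hcarrier RR - P) r1 t1" "clsR (PHI P) w = hfrac RR (hcarrier RR - P) r2 t2"
      "x = hfrac (RR::'a set hyperring) (hcarrier RR - P) (htimes RR r1 r2) (htimes RR t1 t2)" by blast
  obtain a1 f1 c1 where 1: "r1 = PI a1" "t1 = PI f1" "f1 \<notin> PHI P" "c1 \<in> QF" "Fract a1 f1 = c1 * v"
    using rep_clsR[OF Ps v h(1,3,5)] by blast
  obtain a2 f2 c2 where 2: "r2 = PI a2" "t2 = PI f2" "f2 \<notin> PHI P" "c2 \<in> QF" "Fract a2 f2 = c2 * w"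
    using rep_clsR[OF Ps w h(2,4,6)] by blast
  have "Fract (a1*a2) (f1*f2) = Fract a1 f1 * Fract a2 f2" by simp
  also have "\<dots> = (c1*c2) * (v*w)" unfolding 1(5) 2(5) by (simp add: algebra_simps)
  finally have e: "Fract (a1*a2) (f1*f2) = (c1*c2) * (v*w)" .
  have "x = clsR (PHI P) (Fract (a1*a2) (f1*f2))" using h(7) 1 2 times_RR hfrac_R[OF Ps] prime_facts(4)[OF ps] by simp
  also have "\<dots> = clsR (PHI P) ((c1*c2) * (v*w))" by (simp only: e)
  also have "\<dots> = clsR (PHI P) (v*w)" using clsR_QF QF_mult 1 2 by blast
  finally show "x = clsR (PHI P) (v*w)" .
qed

lemma times_RU: assumes "zopen (HAr::'a hyperring) U" "good U v" "good U w"
  shows "htimes (hsheaf RR (PSI ` U)) (SR U v) (SR U w) = SR U (v*w)"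
proof
  fix P show "htimes (hsheaf RR (PSI ` U)) (SR U v) (SR U w) P = SR U (v*w) P"
  proof (cases "P \<in> PSI ` U")
    case True
    then obtain p where p: "p \<in> U" "P = PSI p" by blast
    then have ps: "p \<in> hSpec HAr" using zopen_sub assms by blast
    then have Ps: "P \<in> hSpec RR" "PHI P = p" using spec_A p by auto
    have "rep p v" "rep p w" using p assms unfolding good_def by blast+
    then show ?thesis using True loc_times_R[OF Ps(1)] Ps(2) unfolding hsheaf_def SR_def by simp
  qed (simp add: hsheaf_def SR_def)
qed

lemma QF_Fract: "c \<in> QF \<longleftrightarrow> (\<exists>q\<in>QAr. c = Fract (q::'a) 1)"
  unfolding QF_def by auto

lemma loc_plus_R: assumes Ps: "P \<in> hSpec (RR::'a set hyperring)" and v: "rep (PHI P) v" and w: "rep (PHI P) w"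
  shows "loc_plus RR P (clsR (PHI P) v) (clsR (PHI P) w) = {clsR (PHI P) (c1*v + c2*w) | c1 c2. c1 \<in> QF \<and> c2 \<in> QF}"
proof (intro equalityI subsetI)
  have ps: "PHI P \<in> hSpec HAr" using spec_RR(1)[OF Ps] .
  fix x assume "x \<in> loc_plus RR P (clsR (PHI P) v) (clsR (PHI P) w)"
  then obtain y r1 t1 r2 t2 where h: "r1 \<in> hcarrier RR" "r2 \<in> hcarrier RR" "t1 \<in> hcarrier RR - P" "t2 \<in> hcarrier RR - P"
      "clsR (PHI P) v = hfrac RR (hcarrier RR - P) r1 t1" "clsR (PHI P) w = hfrac RR (hcarrier RR - P) r2 t2"
      "x = hfrac (RR::'a set hyperring) (hcarrier RR - P) y (htimes RR t1 t2)"
      "y \<in> hplus RR (htimes RR r1 t2) (htimes RR t1 r2)"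
    unfolding loc_plus_def by blast
  obtain a1 f1 c1 where 1: "r1 = PI a1" "t1 = PI f1" "f1 \<notin> PHI P" "c1 \<in> QF" "Fract a1 f1 = c1 * v"
    using rep_clsR[OF Ps v h(1,3,5)] by blast
  obtain a2 f2 c2 where 2: "r2 = PI a2" "t2 = PI f2" "f2 \<notin> PHI P" "c2 \<in> QF" "Fract a2 f2 = c2 * w"
    using rep_clsR[OF Ps w h(2,4,6)] by blast
  obtain t s where ts: "t \<in> QAr" "s \<in> QAr" "y = PI (a1*f2*t + f1*a2*s)" using h(8) 1 2 times_RR plus_RR by auto
  have f0: "f1 \<noteq> 0" "f2 \<noteq> 0" using prime_facts(2)[OF ps] 1 2 by auto
  have "x = clsR (PHI P) (Fract (a1*f2*t + f1*a2*s) (f1*f2))" using h(7) 1 2 ts times_RR hfrac_R[OF Ps] prime_facts(4)[OF ps] by simp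
  also have "Fract (a1*f2*t + f1*a2*s) (f1*f2) = Fract t 1 * Fract a1 f1 + Fract s 1 * Fract a2 f2"
    using f0 by (simp add: eq_fract algebra_simps)
  also have "\<dots> = (Fract t 1 * c1) * v + (Fract s 1 * c2) * w" using 1 2 by (simp add: algebra_simps)
  finally show "x \<in> {clsR (PHI P) (c1*v + c2*w) | c1 c2. c1 \<in> QF \<and> c2 \<in> QF}"
    using QF_mult 1 2 ts QF_Fract by blast
next
  have ps: "PHI P \<in> hSpec HAr" using spec_RR(1)[OF Ps] .
  fix x assume "x \<in> {clsR (PHI P) (c1*v + c2*w) | c1 c2. c1 \<in> QF \<and> c2 \<in> QF}"
  then obtain c1 c2 where c: "c1 \<in> QF" "c2 \<in> QF" "x = clsR (PHI P) (c1*v + c2*w)" by blast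
  obtain t s where ts: "t \<in> QAr" "s \<in> QAr" "c1 = Fract t 1" "c2 = Fract s 1" using c QF_Fract by blast
  obtain a1 f1 a2 f2 where r: "f1 \<notin> PHI P" "v = Fract a1 f1" "f2 \<notin> PHI P" "w = Fract a2 f2" using v w unfolding rep_def by blast
  have f0: "f1 \<noteq> 0" "f2 \<noteq> 0" using prime_facts(2)[OF ps] r by auto
  have "c1*v + c2*w = Fract (a1*f2*t + f1*a2*s) (f1*f2)" using f0 ts r by (simp add: eq_fract algebra_simps)
  then have "x = hfrac RR (hcarrier RR - P) (PI (a1*f2*t + f1*a2*s)) (htimes RR (PI f1) (PI f2))"
    using c(3) times_RR hfrac_R[OF Ps] prime_facts(4)[OF ps r(1,3)] by simp
  moreover have "PI (a1*f2*t + f1*a2*s) \<in> hplus RR (htimes RR (PI a1) (PI f2)) (htimes RR (PI f1) (PI a2))"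
    using times_RR plus_RR ts by auto
  moreover have "clsR (PHI P) v = hfrac RR (hcarrier RR - P) (PI a1) (PI f1)" "clsR (PHI P) w = hfrac RR (hcarrier RR - P) (PI a2) (PI f2)"
    using hfrac_R[OF Ps] r by simp_all
  moreover have "PI a1 \<in> hcarrier RR" "PI a2 \<in> hcarrier RR" "PI f1 \<in> hcarrier RR - P" "PI f2 \<in> hcarrier RR - P"
    using r carrier_minus unfolding carrier_RR by auto
  ultimately show "x \<in> loc_plus RR P (clsR (PHI P) v) (clsR (PHI P) w)" unfolding loc_plus_def by blast
qed

end



context qd
begin

lemma good_QF: "good U v \<Longrightarrow> (c::'a fract) \<in> QF \<Longrightarrow> good U (c*v)"
  unfolding good_def using rep_QF by blast

lemma good_comb: assumes "zopen (HAr::'a hyperring) U" "good U v" "good U w" "(c1::'a fract) \<in> QF" "c2 \<in> QF"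
  shows "good U (c1*v + c2*w)"
  using good_add[OF assms(1) good_QF[OF assms(2,4)] good_QF[OF assms(3,5)]] .

lemma plus_RU: assumes U: "zopen (HAr::'a hyperring) U" "U \<noteq> {}" and v: "good U v" and w: "good U w"
  shows "hplus (hsheaf RR (PSI ` U)) (SR U v) (SR U w) = {SR U (c1*v + c2*w) | c1 c2. c1 \<in> QF \<and> c2 \<in> QF}"
proof -
  have "hplus (hsheaf RR (PSI ` U)) (SR U v) (SR U w) =
     {r \<in> hsections RR (PSI ` U). \<forall>P\<in>PSI ` U. r P \<in> loc_plus RR P (SR U v P) (SR U w P)}"
    by (simp add: hsheaf_def)
  also have "\<dots> = {SR U (c1*v + c2*w) | c1 c2. c1 \<in> QF \<and> c2 \<in> QF}"
  proof (intro equalityI subsetI)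
    fix r assume "r \<in> {r \<in> hsections RR (PSI ` U). \<forall>P\<in>PSI ` U. r P \<in> loc_plus RR P (SR U v P) (SR U w P)}"
    then have r: "r \<in> hsections RR (PSI ` U)" "\<forall>P\<in>PSI ` U. r P \<in> loc_plus RR P (SR U v P) (SR U w P)" by auto
    obtain u where u: "good U u" "r = SR U u" using r(1) sections_R[OF U] by auto
    obtain p where p: "p \<in> U" using U by blast
    then have ps: "p \<in> hSpec HAr" using zopen_sub U by blast
    have Ps: "PSI p \<in> hSpec RR" "PHI (PSI p) = p" "PSI p \<in> PSI ` U" using spec_A[OF ps] p by auto
    have reps: "rep p v" "rep p w" "rep p u" using p v w u unfolding good_def by blast+
    have "r (PSI p) \<in> loc_plus RR (PSI p) (SR U v (PSI p)) (SR U w (PSI p))" using r(2) Ps(3) by blast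
    then have "clsR p u \<in> {clsR p (c1*v + c2*w) | c1 c2. c1 \<in> QF \<and> c2 \<in> QF}"
      using u(2) Ps loc_plus_R[OF Ps(1)] reps unfolding SR_def by simp
    then obtain c1 c2 where c: "c1 \<in> QF" "c2 \<in> QF" "clsR p u = clsR p (c1*v + c2*w)" by blast
    have "rep p (c1*v + c2*w)" using rep_add[OF rep_QF[OF reps(1) c(1)] rep_QF[OF reps(2) c(2)] ps] .
    then obtain c where "c \<in> QF" "u = c * (c1*v + c2*w)" using clsR_inj[OF ps] c(3) by metis
    then have "u = (c*c1)*v + (c*c2)*w" "c*c1 \<in> QF" "c*c2 \<in> QF" using QF_mult c by (auto simp: algebra_simps)
    then show "r \<in> {SR U (c1*v + c2*w) | c1 c2. c1 \<in> QF \<and> c2 \<in> QF}" using u by blast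
  next
    fix r assume "r \<in> {SR U (c1*v + c2*w) | c1 c2. c1 \<in> QF \<and> c2 \<in> QF}"
    then obtain c1 c2 where c: "c1 \<in> QF" "c2 \<in> QF" "r = SR U (c1*v + c2*w)" by blast
    have "r \<in> hsections RR (PSI ` U)" using c sections_R[OF U] good_comb[OF U(1) v w c(1,2)] by auto
    moreover have "\<forall>P\<in>PSI ` U. r P \<in> loc_plus RR P (SR U v P) (SR U w P)"
    proof
      fix P assume P: "P \<in> PSI ` U"
      then obtain p where p: "p \<in> U" "P = PSI p" by blast
      then have ps: "p \<in> hSpec HAr" using zopen_sub U by blast
      have Ps: "P \<in> hSpec RR" "PHI P = p" using spec_A[OF ps] p by auto
      have reps: "rep p v" "rep p w" using p v w unfolding good_def by blast+
      have "r P = clsR p (c1*v + c2*w)" "SR U v P = clsR p v" "SR U w P = clsR p w"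
        using c(3) P Ps(2) unfolding SR_def by simp_all
      then show "r P \<in> loc_plus RR P (SR U v P) (SR U w P)" using loc_plus_R[OF Ps(1)] Ps(2) reps c by auto
    qed
    ultimately show "r \<in> {r \<in> hsections RR (PSI ` U). \<forall>P\<in>PSI ` U. r P \<in> loc_plus RR P (SR U v P) (SR U w P)}" by simp
  qed
  finally show ?thesis .
qed

lemma G_eq: assumes "zopen (HAr::'a hyperring) U" shows "const_sec HAr U ` QAr = (\<lambda>c. SA U c) ` QF"
  unfolding QF_def using const_A[OF assms] by (auto simp: image_iff)

lemma coset_SA: assumes U: "zopen (HAr::'a hyperring) U" and v: "good U v"
  shows "hcoset (hsheaf HAr U) (const_sec HAr U ` QAr) (SA U v) = (\<lambda>c. SA U (c*v)) ` QF"
proof -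
  have "hcoset (hsheaf HAr U) (const_sec HAr U ` QAr) (SA U v) = {htimes (hsheaf HAr U) (SA U v) g | g. g \<in> (\<lambda>c. SA U c) ` QF}"
    unfolding hcoset_def G_eq[OF U] ..
  also have "\<dots> = (\<lambda>c. SA U (c*v)) ` QF"
  proof (intro equalityI subsetI)
    fix x assume "x \<in> {htimes (hsheaf HAr U) (SA U v) g | g. g \<in> (\<lambda>c. SA U c) ` QF}"
    then obtain c where c: "c \<in> QF" "x = htimes (hsheaf HAr U) (SA U v) (SA U c)" by blast
    then obtain q where "c = Fract q 1" unfolding QF_def by auto
    then have "good U c" using good_Fract1[OF U] by simp
    then have "x = SA U (c*v)" using c times_HU[OF U v] by (simp add: mult.commute)
    then show "x \<in> (\<lambda>c. SA U (c*v)) ` QF" using c by blast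
  next
    fix x assume "x \<in> (\<lambda>c. SA U (c*v)) ` QF"
    then obtain c where c: "c \<in> QF" "x = SA U (c*v)" by blast
    then obtain q where "c = Fract q 1" unfolding QF_def by auto
    then have "good U c" using good_Fract1[OF U] by simp
    then have "x = htimes (hsheaf HAr U) (SA U v) (SA U c)" using c times_HU[OF U v] by (simp add: mult.commute)
    then show "x \<in> {htimes (hsheaf HAr U) (SA U v) g | g. g \<in> (\<lambda>c. SA U c) ` QF}" using c by blast
  qed
  finally show ?thesis .
qed

lemma coset_eq: assumes U: "zopen (HAr::'a hyperring) U" "U \<noteq> {}" and v: "good U v" and w: "good U w"
  shows "hcoset (hsheaf HAr U) (const_sec HAr U ` QAr) (SA U v) = hcoset (hsheaf HAr U) (const_sec HAr U ` QAr) (SA U w)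
    \<longleftrightarrow> (\<exists>c\<in>QF. w = c*v)"
proof
  assume "hcoset (hsheaf HAr U) (const_sec HAr U ` QAr) (SA U v) = hcoset (hsheaf HAr U) (const_sec HAr U ` QAr) (SA U w)"
  then have "(\<lambda>c. SA U (c*v)) ` QF = (\<lambda>c. SA U (c*w)) ` QF" using coset_SA U v w by simp
  moreover have "SA U (1*w) \<in> (\<lambda>c. SA U (c*w)) ` QF" using QF_one by blast
  ultimately obtain c where c: "c \<in> QF" "SA U w = SA U (c*v)" by auto
  then have "c*v = w" using SA_inj[OF U(2) good_QF[OF v c(1)]] by metis
  then show "\<exists>c\<in>QF. w = c*v" using c by blast
next
  assume "\<exists>c\<in>QF. w = c*v"
  then obtain c where c: "c \<in> QF" "w = c*v" by blast
  have "(\<lambda>d. SA U (d*w)) ` QF = (\<lambda>c. SA U (c*v)) ` QF"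
  proof (intro equalityI subsetI)
    fix x assume "x \<in> (\<lambda>d. SA U (d*w)) ` QF"
    then obtain d where "d \<in> QF" "x = SA U (d*w)" by blast
    then show "x \<in> (\<lambda>c. SA U (c*v)) ` QF" using c QF_mult by (auto simp: mult.assoc[symmetric] intro!: image_eqI)
  next
    fix x assume "x \<in> (\<lambda>d. SA U (d*v)) ` QF"
    then obtain d where d: "d \<in> QF" "x = SA U (d*v)" by blast
    have "d*v = (d * inverse c) * w" using c QF_inv(2)[OF c(1)] by (simp add: field_simps)
    moreover have "d * inverse c \<in> QF" using QF_mult QF_inv(1) c d by blast
    ultimately show "x \<in> (\<lambda>d. SA U (d*w)) ` QF" using d by (metis (no_types, lifting) image_eqI)
  qed
  then show "hcoset (hsheaf HAr U) (const_sec HAr U ` QAr) (SA U v) = hcoset (hsheaf HAr U) (const_sec HAr U ` QAr) (SA U w)"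
    using coset_SA U v w by simp
qed


lemma carrier_K: assumes U: "zopen (HAr::'a hyperring) U" "U \<noteq> {}"
  shows "hcarrier (hquot (hsheaf HAr U) (const_sec HAr U ` QAr)) = (\<lambda>v. hcoset (hsheaf HAr U) (const_sec HAr U ` QAr) (SA U v)) ` {v. good U v}"
  using sections_A[OF U] by (auto simp: hquot_def hsheaf_def)

lemma qtimes_K: assumes U: "zopen (HAr::'a hyperring) U" "U \<noteq> {}" and v: "good U v" and w: "good U w"
  shows "htimes (hquot (hsheaf HAr U) (const_sec HAr U ` QAr)) (hcoset (hsheaf HAr U) (const_sec HAr U ` QAr) (SA U v)) (hcoset (hsheaf HAr U) (const_sec HAr U ` QAr) (SA U w))
     = hcoset (hsheaf HAr U) (const_sec HAr U ` QAr) (SA U (v*w))"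
proof -
  let ?B = "hsheaf (HAr::'a hyperring) U" and ?G = "const_sec (HAr::'a hyperring) U ` QAr"
  have cB: "hcarrier ?B = SA U ` {v. good U v}" using sections_A[OF U] by (simp add: hsheaf_def)
  have "htimes (hquot ?B ?G) (hcoset ?B ?G (SA U v)) (hcoset ?B ?G (SA U w)) = quot_times ?B ?G (hcoset ?B ?G (SA U v)) (hcoset ?B ?G (SA U w))"
    by (simp add: hquot_def)
  also have "\<dots> = hcoset ?B ?G (SA U (v*w))"
    unfolding quot_times_def
  proof (rule someI2)
    show "\<exists>x y. x \<in> hcarrier ?B \<and> y \<in> hcarrier ?B \<and> hcoset ?B ?G (SA U v) = hcoset ?B ?G x \<and> hcoset ?B ?G (SA U w) = hcoset ?B ?G y \<and>
       hcoset ?B ?G (SA U (v*w)) = hcoset ?B ?G (htimes ?B x y)"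
      using cB v w times_HU[OF U(1) v w] by (intro exI[of _ "SA U v"] exI[of _ "SA U w"]) auto
  next
    fix Z assume "\<exists>x y. x \<in> hcarrier ?B \<and> y \<in> hcarrier ?B \<and> hcoset ?B ?G (SA U v) = hcoset ?B ?G x \<and> hcoset ?B ?G (SA U w) = hcoset ?B ?G y \<and>
       Z = hcoset ?B ?G (htimes ?B x y)"
    then obtain v' w' where h: "good U v'" "good U w'" "hcoset ?B ?G (SA U v) = hcoset ?B ?G (SA U v')"
      "hcoset ?B ?G (SA U w) = hcoset ?B ?G (SA U w')" "Z = hcoset ?B ?G (htimes ?B (SA U v') (SA U w'))"
      using cB by auto
    obtain c d where cd: "c \<in> QF" "d \<in> QF" "v' = c*v" "w' = d*w" using coset_eq[OF U v h(1)] coset_eq[OF U w h(2)] h by metis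
    have "Z = hcoset ?B ?G (SA U (v'*w'))" using h(5) times_HU[OF U(1) h(1,2)] by simp
    also have "v'*w' = (c*d)*(v*w)" using cd by (simp add: algebra_simps)
    finally show "Z = hcoset ?B ?G (SA U (v*w))" using coset_eq[OF U good_mult[OF U(1) v w] good_QF[OF good_mult[OF U(1) v w]]] QF_mult cd
      by metis
  qed
  finally show ?thesis .
qed

lemma hplus_K: assumes U: "zopen (HAr::'a hyperring) U" "U \<noteq> {}" and v: "good U v" and w: "good U w"
  shows "hplus (hquot (hsheaf HAr U) (const_sec HAr U ` QAr)) (hcoset (hsheaf HAr U) (const_sec HAr U ` QAr) (SA U v)) (hcoset (hsheaf HAr U) (const_sec HAr U ` QAr) (SA U w))
     = {hcoset (hsheaf HAr U) (const_sec HAr U ` QAr) (SA U (c1*v + c2*w)) | c1 c2. c1 \<in> QF \<and> c2 \<in> QF}"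
proof -
  let ?B = "hsheaf (HAr::'a hyperring) U" and ?G = "const_sec (HAr::'a hyperring) U ` QAr"
  have cB: "hcarrier ?B = SA U ` {v. good U v}" using sections_A[OF U] by (simp add: hsheaf_def)
  have GQ: "?G = (\<lambda>c. SA U c) ` QF" using G_eq[OF U(1)] .
  have gQ: "c \<in> QF \<Longrightarrow> good U c" for c using good_Fract1[OF U(1)] unfolding QF_def by auto
  have "hplus (hquot ?B ?G) (hcoset ?B ?G (SA U v)) (hcoset ?B ?G (SA U w)) =
    {hcoset ?B ?G q | q x y t s. x \<in> hcarrier ?B \<and> y \<in> hcarrier ?B \<and> hcoset ?B ?G (SA U v) = hcoset ?B ?G x \<and>
       hcoset ?B ?G (SA U w) = hcoset ?B ?G y \<and> t \<in> ?G \<and> s \<in> ?G \<and> q \<in> hplus ?B (htimes ?B x t) (htimes ?B y s)}"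
    by (simp add: hquot_def)
  also have "\<dots> = {hcoset ?B ?G (SA U (c1*v + c2*w)) | c1 c2. c1 \<in> QF \<and> c2 \<in> QF}"
  proof (intro equalityI subsetI)
    fix Z assume "Z \<in> {hcoset ?B ?G q | q x y t s. x \<in> hcarrier ?B \<and> y \<in> hcarrier ?B \<and> hcoset ?B ?G (SA U v) = hcoset ?B ?G x \<and>
       hcoset ?B ?G (SA U w) = hcoset ?B ?G y \<and> t \<in> ?G \<and> s \<in> ?G \<and> q \<in> hplus ?B (htimes ?B x t) (htimes ?B y s)}"
    then obtain q v' w' c1 c2 where h: "good U v'" "good U w'" "hcoset ?B ?G (SA U v) = hcoset ?B ?G (SA U v')"
      "hcoset ?B ?G (SA U w) = hcoset ?B ?G (SA U w')" "c1 \<in> QF" "c2 \<in> QF"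
      "q \<in> hplus ?B (htimes ?B (SA U v') (SA U c1)) (htimes ?B (SA U w') (SA U c2))" "Z = hcoset ?B ?G q"
      unfolding cB GQ by blast
    obtain c d where cd: "c \<in> QF" "d \<in> QF" "v' = c*v" "w' = d*w" using coset_eq[OF U v h(1)] coset_eq[OF U w h(2)] h by metis
    have "q \<in> hplus ?B (SA U (v'*c1)) (SA U (w'*c2))" using h(7) times_HU[OF U(1)] h gQ by simp
    then have "q = SA U (v'*c1 + w'*c2)" using plus_HU[OF U good_mult[OF U(1) h(1) gQ[OF h(5)]] good_mult[OF U(1) h(2) gQ[OF h(6)]]] by simp
    moreover have "v'*c1 + w'*c2 = (c*c1)*v + (d*c2)*w" using cd by (simp add: algebra_simps)
    moreover have "c*c1 \<in> QF" "d*c2 \<in> QF" using QF_mult cd h by auto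
    ultimately show "Z \<in> {hcoset ?B ?G (SA U (c1*v + c2*w)) | c1 c2. c1 \<in> QF \<and> c2 \<in> QF}" using h(8) by auto
  next
    fix Z assume "Z \<in> {hcoset ?B ?G (SA U (c1*v + c2*w)) | c1 c2. c1 \<in> QF \<and> c2 \<in> QF}"
    then obtain c1 c2 where c: "c1 \<in> QF" "c2 \<in> QF" "Z = hcoset ?B ?G (SA U (c1*v + c2*w))" by blast
    have "SA U (c1*v + c2*w) \<in> hplus ?B (htimes ?B (SA U v) (SA U c1)) (htimes ?B (SA U w) (SA U c2))"
      using times_HU[OF U(1)] plus_HU[OF U] good_mult[OF U(1)] v w gQ c by (simp add: mult.commute)
    moreover have "SA U v \<in> hcarrier ?B" "SA U w \<in> hcarrier ?B" "SA U c1 \<in> ?G" "SA U c2 \<in> ?G" using cB GQ v w c by auto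
    ultimately show "Z \<in> {hcoset ?B ?G q | q x y t s. x \<in> hcarrier ?B \<and> y \<in> hcarrier ?B \<and> hcoset ?B ?G (SA U v) = hcoset ?B ?G x \<and>
       hcoset ?B ?G (SA U w) = hcoset ?B ?G y \<and> t \<in> ?G \<and> s \<in> ?G \<and> q \<in> hplus ?B (htimes ?B x t) (htimes ?B y s)}"
      using c(3) by blast
  qed
  finally show ?thesis .
qed


end

definition FF :: "'a::idom set set \<Rightarrow> ('a set set \<Rightarrow> ('a set \<times> 'a set) set) \<Rightarrow> ('a set \<Rightarrow> ('a \<times> 'a) set) set" where
  "FF U r = hcoset (hsheaf HAr U) (const_sec HAr U ` QAr) (SA U (SOME v. good U v \<and> r = SR U v))"

context qd
begin

lemma FF_SR: assumes U: "zopen (HAr::'a hyperring) U" "U \<noteq> {}" and v: "good U v"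
  shows "FF U (SR U v) = hcoset (hsheaf HAr U) (const_sec HAr U ` QAr) (SA U v)"
  unfolding FF_def
proof (rule someI2)
  show "good U v \<and> SR U v = SR U v" using v by simp
next
  fix v' assume h: "good U v' \<and> SR U v = SR U v'"
  then obtain c where "c \<in> QF" "v = c * v'" using SR_eq[OF U, of v' v] by metis
  then show "hcoset (hsheaf HAr U) (const_sec HAr U ` QAr) (SA U v') = hcoset (hsheaf HAr U) (const_sec HAr U ` QAr) (SA U v)"
    using coset_eq[OF U _ v] h by metis
qed

lemma iso_main: assumes U: "zopen (HAr::'a hyperring) U" "U \<noteq> {}"
  shows "hyperring_iso (FF U) (hsheaf RR (PSI ` U)) (hquot (hsheaf HAr U) (const_sec HAr U ` QAr))"
proof -
  let ?B = "hsheaf (HAr::'a hyperring) U" and ?G = "const_sec (HAr::'a hyperring) U ` QAr"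
  let ?K = "hquot ?B ?G" and ?S = "hsheaf (RR::'a set hyperring) (PSI ` U)"
  let ?c = "\<lambda>v. hcoset ?B ?G (SA U v)"
  have cS: "hcarrier ?S = SR U ` {v. good U v}" using sections_R[OF U] by (simp add: hsheaf_def)
  have cK: "hcarrier ?K = ?c ` {v. good U v}" using carrier_K[OF U] .
  have bij: "bij_betw (FF U) (hcarrier ?S) (hcarrier ?K)"
    unfolding bij_betw_def
  proof
    show "inj_on (FF U) (hcarrier ?S)"
    proof (rule inj_onI)
      fix x y assume "x \<in> hcarrier ?S" "y \<in> hcarrier ?S" and e: "FF U x = FF U y"
      then obtain v w where vw: "good U v" "good U w" "x = SR U v" "y = SR U w" using cS by auto
      then have "?c v = ?c w" using e FF_SR[OF U] by simp
      then obtain c where "c \<in> QF" "w = c*v" using coset_eq[OF U vw(1,2)] by blast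
      then show "x = y" using vw SR_QF by simp
    qed
    show "FF U ` hcarrier ?S = hcarrier ?K"
      unfolding cS cK using FF_SR[OF U] by (auto simp: image_iff)
  qed
  have ops: "\<forall>x\<in>hcarrier ?S. \<forall>y\<in>hcarrier ?S. FF U (htimes ?S x y) = htimes ?K (FF U x) (FF U y) \<and>
      FF U ` hplus ?S x y = hplus ?K (FF U x) (FF U y)"
  proof (intro ballI conjI)
    fix x y assume "x \<in> hcarrier ?S" "y \<in> hcarrier ?S"
    then obtain v w where vw: "good U v" "good U w" "x = SR U v" "y = SR U w" using cS by auto
    show "FF U (htimes ?S x y) = htimes ?K (FF U x) (FF U y)"
      using vw times_RU[OF U(1) vw(1,2)] FF_SR[OF U] good_mult[OF U(1) vw(1,2)] qtimes_K[OF U vw(1,2)] by simp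
    have "FF U ` hplus ?S x y = FF U ` {SR U (c1*v + c2*w) | c1 c2. c1 \<in> QF \<and> c2 \<in> QF}"
      using vw plus_RU[OF U vw(1,2)] by simp
    also have "\<dots> = {?c (c1*v + c2*w) | c1 c2. c1 \<in> QF \<and> c2 \<in> QF}"
    proof (intro equalityI subsetI)
      fix z assume "z \<in> FF U ` {SR U (c1*v + c2*w) | c1 c2. c1 \<in> QF \<and> c2 \<in> QF}"
      then obtain c1 c2 where c: "c1 \<in> QF" "c2 \<in> QF" "z = FF U (SR U (c1*v + c2*w))" by blast
      then have "z = ?c (c1*v + c2*w)" using FF_SR[OF U good_comb[OF U(1) vw(1,2) c(1,2)]] by simp
      then show "z \<in> {?c (c1*v + c2*w) | c1 c2. c1 \<in> QF \<and> c2 \<in> QF}" using c by blast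
    next
      fix z assume "z \<in> {?c (c1*v + c2*w) | c1 c2. c1 \<in> QF \<and> c2 \<in> QF}"
      then obtain c1 c2 where c: "c1 \<in> QF" "c2 \<in> QF" "z = ?c (c1*v + c2*w)" by blast
      then have "z = FF U (SR U (c1*v + c2*w))" using FF_SR[OF U good_comb[OF U(1) vw(1,2) c(1,2)]] by simp
      then show "z \<in> FF U ` {SR U (c1*v + c2*w) | c1 c2. c1 \<in> QF \<and> c2 \<in> QF}" using c by blast
    qed
    also have "\<dots> = hplus ?K (FF U x) (FF U y)" using hplus_K[OF U vw(1,2)] FF_SR[OF U] vw by simp
    finally show "FF U ` hplus ?S x y = hplus ?K (FF U x) (FF U y)" .
  qed
  have z: "FF U (hzero ?S) = hzero ?K"
  proof -
    have "hzero ?S = SR U (Fract 0 1)" using const_R[OF U(1), of 0] zero_RR by (simp add: hsheaf_def)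
    moreover have "hzero ?K = ?c (Fract 0 1)" using const_A[OF U(1), of 0] by (simp add: hquot_def hsheaf_def)
    ultimately show ?thesis using FF_SR[OF U good_Fract1[OF U(1)]] by simp
  qed
  have o: "FF U (hone ?S) = hone ?K"
  proof -
    have "hone ?S = SR U (Fract 1 1)" using const_R[OF U(1), of 1] one_RR by (simp add: hsheaf_def)
    moreover have "hone ?K = ?c (Fract 1 1)" using const_A[OF U(1), of 1] by (simp add: hquot_def hsheaf_def)
    ultimately show ?thesis using FF_SR[OF U good_Fract1[OF U(1)]] by simp
  qed
  show ?thesis unfolding hyperring_iso_def using bij ops z o by blast
qed

lemma part1: "bij_betw PHI (hSpec (RR::'a set hyperring)) (hSpec HAr)
   \<and> (\<forall>U. zopen HAr U \<longrightarrow> zopen RR {P \<in> hSpec (RR::'a set hyperring). PHI P \<in> U})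
   \<and> (\<forall>W. zopen (RR::'a set hyperring) W \<longrightarrow> zopen HAr (PHI ` W))"
proof (intro conjI allI impI)
  show "bij_betw PHI (hSpec (RR::'a set hyperring)) (hSpec HAr)"
    by (rule bij_betw_byWitness[where f' = PSI]) (use spec_RR spec_A in \<open>auto\<close>)
next
  fix U :: "'a set set" assume U: "zopen HAr U"
  have "{P \<in> hSpec (RR::'a set hyperring). PHI P \<in> U} = PSI ` U"
    using spec_RR spec_A zopen_sub[OF U] by (auto simp: image_iff)
  then show "zopen RR {P \<in> hSpec (RR::'a set hyperring). PHI P \<in> U}" using zopen_RR_iff U by auto
next
  fix W :: "'a set set set" assume "zopen RR W"
  then obtain U where U: "zopen HAr U" "W = PSI ` U" using zopen_RR_iff by blast
  then have "PHI ` W = U" using spec_A zopen_sub[OF U(1)] by (auto simp: image_iff)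
  then show "zopen HAr (PHI ` W)" using U by simp
qed

end


lemma set_eq_PSI: assumes "qd TYPE('a::idom)" "zopen (HAr::'a hyperring) U"
  shows "{P \<in> hSpec (RR::'a set hyperring). PHI P \<in> U} = PSI ` U"
proof -
  interpret qd "TYPE('a)" by (rule assms(1))
  show ?thesis using spec_RR spec_A zopen_sub[OF assms(2)] by (auto simp: image_iff)
qed

theorem proposition4p35:
  fixes HA :: "'a::idom hyperring"
    and QA :: "'a set" and R :: "'a set hyperring"
    and \<pi> :: "'a \<Rightarrow> 'a set" and \<phi> :: "'a set set \<Rightarrow> 'a set"
  assumes contains_Q: "\<forall>n::nat. n \<noteq> 0 \<longrightarrow> (of_nat n :: 'a) dvd 1"
  defines "HA \<equiv> ring_hyp"
    and "QA \<equiv> rat_units"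
    and "R \<equiv> hquot HA QA"
    and "\<pi> \<equiv> hcoset HA QA"
    and "\<phi> \<equiv> (\<lambda>P. {a. \<pi> a \<in> P})"
  shows "(bij_betw \<phi> (hSpec R) (hSpec HA)
       \<and> (\<forall>U. zopen HA U \<longrightarrow> zopen R {P \<in> hSpec R. \<phi> P \<in> U})
       \<and> (\<forall>W. zopen R W \<longrightarrow> zopen HA (\<phi> ` W)))
       \<and> (\<forall>U. zopen HA U \<and> U \<noteq> {} \<longrightarrow>
       (\<exists>f. hyperring_iso f (hsheaf R {P \<in> hSpec R. \<phi> P \<in> U})
                             (hquot (hsheaf HA U) (const_sec HA U ` QA))))"
proof -
  have q: "qd TYPE('a)" using contains_Q by (unfold_locales)
  interpret qd "TYPE('a)" by (rule q)
  have e: "\<phi> = PHI" unfolding \<phi>_def \<pi>_def QA_def HA_def PHI_def by (rule ext) simp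
  have p1: "bij_betw \<phi> (hSpec R) (hSpec HA)
       \<and> (\<forall>U. zopen HA U \<longrightarrow> zopen R {P \<in> hSpec R. \<phi> P \<in> U})
       \<and> (\<forall>W. zopen R W \<longrightarrow> zopen HA (\<phi> ` W))"
    unfolding e R_def HA_def QA_def using part1 by simp
  have p2: "\<forall>U. zopen HA U \<and> U \<noteq> {} \<longrightarrow>
       (\<exists>f. hyperring_iso f (hsheaf R {P \<in> hSpec R. \<phi> P \<in> U})
                             (hquot (hsheaf HA U) (const_sec HA U ` QA)))"
  proof (intro allI impI)
    fix U assume U: "zopen HA U \<and> U \<noteq> {}"
    then have U': "zopen (HAr::'a hyperring) U" "U \<noteq> {}" unfolding HA_def by auto
    have "{P \<in> hSpec R. \<phi> P \<in> U} = PSI ` U" unfolding e R_def HA_def QA_def using set_eq_PSI[OF q U'(1)] by simp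
    then show "\<exists>f. hyperring_iso f (hsheaf R {P \<in> hSpec R. \<phi> P \<in> U}) (hquot (hsheaf HA U) (const_sec HA U ` QA))"
      unfolding R_def HA_def QA_def using iso_main[OF U'] by auto
  qed
  show ?thesis using p1 p2 by blast
qed

end
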